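(* For every integer $l\ge 3$ there exists a (non-monotone) search $\tilde c$-strategy that cleans the tree $T_l$ using $3$ searchers, one of each color $1,2,3$.
   Context: An edge-labeled graph $G=(V(G),E(G),c)$ is a simple graph with $c\colon E(G)\to\{1,\dots,k\}$; $c(v)$ denotes the set of colors of edges incident to $v$. Edge search: a search strategy is a sequence of moves: placing a searcher on a vertex, removing a searcher from a vertex, or sliding a searcher from $u$ along an edge $\{u,v\}$ to $v$. Initially all edges are contaminated; a slide along an edge makes it clean; after every move, a clean edge $e$ becomes contaminated if some path with no searcher-occupied vertex joins an endpoint of $e$ to an endpoint of a contaminated edge. The strategy must end with all edges clean; it uses $k$ searchers if at most $k$ are simultaneously present. In a search $\tilde c$-strategy each searcher $j$ has a fixed color $\tilde c(j)$, may be placed on $v$ only if $\tilde c(j)\in c(v)$, and may slide along $e$ only if $\tilde c(j)=c(e)$. The tree $T_l$ ($l\ge 3$), with colors $\{1,2,3\}$: For $i\in\{1,2\}$, $T'_i$ has root $q_i$ with three children joined to $q_i$ by edges of color 1, and each of these children has three children joined by edges of color 2. $T''_l$: a path $v_0,v_1,\dots,v_{l+1}$ with edges $e_x=\{v_x,v_{x+1}\}$ of color $(x \bmod 3)+1$ for $x\in\{0,\dots,l\}$; additionally, for each $x\in\{1,\dots,l\}$, attach to $v_x$ one pendant edge of color $(x\bmod 3)+1$ and one pendant edge of color $((x-1)\bmod 3)+1$. Let $P$ be a path $p_0p_1p_2p_3p_4$ with edges $\{p_0,p_1\},\{p_3,p_4\}$ of color 3 and $\{p_1,p_2\},\{p_2,p_3\}$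 of color 2. $T_l$ is obtained from disjoint copies of $T'_1,T'_2,T''_l,P$ by identifying $p_2$ with $v_0$, $p_0$ with $q_1$, and $p_4$ with $q_2$. *)

theory Defs
  imports Main
begin

text \<open>A configuration is a pair (pos, K): pos j is the vertex occupied by
searcher j (None if searcher j is currently not on the graph), and K is the
set of clean edges.\<close>

datatype 'v move = Place nat 'v | Remove nat | Slide nat 'v 'v

definition vcolors :: "'v set set \<Rightarrow> ('v set \<Rightarrow> nat) \<Rightarrow> 'v \<Rightarrow> nat set" where
  "vcolors E c v = {c e | e. e \<in> E \<and> v \<in> e}"

definition occupied :: "(nat \<Rightarrow> 'v option) \<Rightarrow> 'v set" where
  "occupied pos = {v. \<exists>j. pos j = Some v}"

definition free_conn :: "'v set set \<Rightarrow> 'v set \<Rightarrow> 'v \<Rightarrow> 'v \<Rightarrow> bool" where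
  "free_conn E Occ x y \<longleftrightarrow> x \<notin> Occ \<and>
     (\<lambda>a b. {a, b} \<in> E \<and> a \<notin> Occ \<and> b \<notin> Occ)\<^sup>*\<^sup>* x y"

definition recont :: "'v set set \<Rightarrow> 'v set \<Rightarrow> 'v set set \<Rightarrow> 'v set set" where
  "recont E Occ K = K - {e \<in> K. \<exists>x \<in> e. \<exists>f \<in> E - K. \<exists>y \<in> f. free_conn E Occ x y}"

fun step :: "'v set set \<Rightarrow> ('v set \<Rightarrow> nat) \<Rightarrow> nat set \<Rightarrow> (nat \<Rightarrow> nat)
    \<Rightarrow> (nat \<Rightarrow> 'v option) \<times> 'v set set \<Rightarrow> 'v move
    \<Rightarrow> ((nat \<Rightarrow> 'v option) \<times> 'v set set) option" where
  "step E c S ct (pos, K) (Place j v) =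
     (if j \<in> S \<and> pos j = None \<and> ct j \<in> vcolors E c v
      then Some (pos(j := Some v), recont E (occupied (pos(j := Some v))) K)
      else None)"
| "step E c S ct (pos, K) (Remove j) =
     (if j \<in> S \<and> pos j \<noteq> None
      then Some (pos(j := None), recont E (occupied (pos(j := None))) K)
      else None)"
| "step E c S ct (pos, K) (Slide j u v) =
     (if j \<in> S \<and> pos j = Some u \<and> {u, v} \<in> E \<and> ct j = c {u, v}
      then Some (pos(j := Some v),
                 recont E (occupied (pos(j := Some v))) (K \<union> {{u, v}}))
      else None)"

fun run :: "'v set set \<Rightarrow> ('v set \<Rightarrow> nat) \<Rightarrow> nat set \<Rightarrow> (nat \<Rightarrow> nat)
    \<Rightarrow> (nat \<Rightarrow> 'v option) \<times> 'v set set \<Rightarrow> 'v move list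
    \<Rightarrow> ((nat \<Rightarrow> 'v option) \<times> 'v set set) option" where
  "run E c S ct st [] = Some st"
| "run E c S ct st (m # ms) =
     (case step E c S ct st m of None \<Rightarrow> None | Some st' \<Rightarrow> run E c S ct st' ms)"

text \<open>No monotonicity is required.\<close>
definition search_strategy :: "'v set set \<Rightarrow> ('v set \<Rightarrow> nat) \<Rightarrow> nat set \<Rightarrow> (nat \<Rightarrow> nat)
    \<Rightarrow> 'v move list \<Rightarrow> bool" where
  "search_strategy E c S ct ms \<longleftrightarrow>
     (\<exists>pos. run E c S ct (\<lambda>_. None, {}) ms = Some (pos, E))"

text \<open>Vertices: Q i = q_i (= p_0 for i=1, = p_4 for i=2); A i j = children of q_i;
B i j k = children of A i j; Pv 1 = p_1, Pv 3 = p_3; V x = v_x (V 0 = p_2);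
W x b = the two pendant vertices attached to v_x.\<close>
datatype tv = Q nat | A nat nat | B nat nat nat | Pv nat | V nat | W nat nat

definition T_labeled :: "nat \<Rightarrow> (tv set \<times> nat) set" where
  "T_labeled l =
     {({Q i, A i j}, 1) | i j. i \<in> {1, 2} \<and> j < 3}
   \<union> {({A i j, B i j k}, 2) | i j k. i \<in> {1, 2} \<and> j < 3 \<and> k < 3}
   \<union> {({Q 1, Pv 1}, 3), ({Pv 1, V 0}, 2), ({V 0, Pv 3}, 2), ({Pv 3, Q 2}, 3)}
   \<union> {({V x, V (x + 1)}, x mod 3 + 1) | x. x \<le> l}
   \<union> {({V x, W x 0}, x mod 3 + 1) | x. 1 \<le> x \<and> x \<le> l}
   \<union> {({V x, W x 1}, (x - 1) mod 3 + 1) | x. 1 \<le> x \<and> x \<le> l}"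

definition T_edges :: "nat \<Rightarrow> tv set set" where
  "T_edges l = fst ` T_labeled l"

definition T_color :: "nat \<Rightarrow> tv set \<Rightarrow> nat" where
  "T_color l e = (THE k. (e, k) \<in> T_labeled l)"

end

theory Submission
  imports Defs
begin


lemma rtranclp_sym:
  assumes "\<And>a b. R a b \<Longrightarrow> R b a" and "R\<^sup>*\<^sup>* x y" shows "R\<^sup>*\<^sup>* y x"
  using assms(2) by (induction rule: rtranclp_induct) (auto intro: converse_rtranclp_into_rtranclp assms(1))

lemma path_sym:
  assumes "(\<lambda>a b. {a, b} \<in> E \<and> a \<notin> Occ' \<and> b \<notin> Occ')\<^sup>*\<^sup>* x y"
  shows "(\<lambda>a b. {a, b} \<in> E \<and> a \<notin> Occ' \<and> b \<notin> Occ')\<^sup>*\<^sup>* y x"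
  using assms
proof (induction rule: rtranclp_induct)
  case base then show ?case by simp
next
  case (step y z)
  have "{z, y} \<in> E \<and> z \<notin> Occ' \<and> y \<notin> Occ'" using step(2) by (simp add: insert_commute)
  then show ?case using step(3) by (rule converse_rtranclp_into_rtranclp[where r="\<lambda>a b. {a, b} \<in> E \<and> a \<notin> Occ' \<and> b \<notin> Occ'"])
qed

lemma path_split:
  assumes "(\<lambda>a b. {a, b} \<in> E \<and> a \<notin> Occ' \<and> b \<notin> Occ')\<^sup>*\<^sup>* x y"
    and "Occ - {v} \<subseteq> Occ'" and "Occ' \<subseteq> Occ"
  shows "(\<lambda>a b. {a, b} \<in> E \<and> a \<notin> Occ \<and> b \<notin> Occ)\<^sup>*\<^sup>* x y
       \<or> (\<lambda>a b. {a, b} \<in> E \<and> a \<notin> Occ' \<and> b \<notin> Occ')\<^sup>*\<^sup>* x v"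
  using assms(1)
proof (induction rule: rtranclp_induct)
  case base then show ?case by simp
next
  case (step z w)
  show ?case
  proof (cases "z = v \<or> w = v")
    case True
    then show ?thesis
    proof
      assume "z = v" then show ?thesis using step(1) by simp
    next
      assume "w = v" then show ?thesis using rtranclp.rtrancl_into_rtrancl[OF step(1) step(2)] by simp
    qed
  next
    case False
    then have "z \<notin> Occ" "w \<notin> Occ" using step(2) assms(2) by auto
    then have "(\<lambda>a b. {a, b} \<in> E \<and> a \<notin> Occ \<and> b \<notin> Occ) z w" using step(2) by simp
    then show ?thesis using step(3) rtranclp.rtrancl_into_rtrancl by (metis (no_types, lifting))
  qed
qed

lemma path_closed:
  assumes "(\<lambda>a b. {a, b} \<in> E \<and> a \<notin> Occ' \<and> b \<notin> Occ')\<^sup>*\<^sup>* v y" "v \<in> N"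
    and "\<forall>a b. {a, b} \<in> E \<longrightarrow> a \<in> N \<longrightarrow> a \<notin> Occ' \<longrightarrow> b \<notin> Occ' \<longrightarrow> b \<in> N"
  shows "y \<in> N"
  using assms(1,2) by (induction rule: rtranclp_induct) (use assms(3) in blast)+

lemma path_end:
  assumes "(\<lambda>a b. {a, b} \<in> E \<and> a \<notin> Occ' \<and> b \<notin> Occ')\<^sup>*\<^sup>* x y" "x \<notin> Occ'"
  shows "y \<notin> Occ'"
  using assms by (induction rule: rtranclp_induct) auto

lemma path_mono:
  assumes "(\<lambda>a b. {a, b} \<in> E \<and> a \<notin> Occ' \<and> b \<notin> Occ')\<^sup>*\<^sup>* x y" "Occ \<subseteq> Occ'"
  shows "(\<lambda>a b. {a, b} \<in> E \<and> a \<notin> Occ \<and> b \<notin> Occ)\<^sup>*\<^sup>* x y"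
  using assms(1) by (induction rule: rtranclp_induct) (use assms(2) in \<open>auto intro: rtranclp.rtrancl_into_rtrancl\<close>)

lemma recont_sub: "recont E Occ K \<subseteq> K" unfolding recont_def by auto

lemma add_stable:
  assumes "recont E Occ K = K" "Occ \<subseteq> Occ'" "K \<subseteq> K'" "\<forall>e\<in>K' - K. \<forall>x\<in>e. x \<in> Occ'"
  shows "recont E Occ' K' = K'"
proof -
  have "e \<in> recont E Occ' K'" if e: "e \<in> K'" for e
  proof (rule ccontr)
    assume "e \<notin> recont E Occ' K'"
    then obtain x f y where x: "x \<in> e" and f: "f \<in> E - K'" and y: "y \<in> f" and fc: "free_conn E Occ' x y"
      using e unfolding recont_def by auto
    have "x \<notin> Occ'" using fc unfolding free_conn_def by auto
    then have eK: "e \<in> K" using assms(4) e x by auto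
    have "free_conn E Occ x y" using fc assms(2) unfolding free_conn_def by (auto intro: path_mono)
    then have "e \<notin> recont E Occ K" using eK x f y assms(3) unfolding recont_def by auto
    then show False using assms(1) eK by simp
  qed
  then show ?thesis using recont_sub by blast
qed

definition closedN :: "'v set set \<Rightarrow> 'v set \<Rightarrow> 'v set \<Rightarrow> bool" where
  "closedN E Occ N \<longleftrightarrow> (\<forall>a b. {a, b} \<in> E \<longrightarrow> a \<in> N \<longrightarrow> a \<notin> Occ \<longrightarrow> b \<notin> Occ \<longrightarrow> b \<in> N)"
definition cleanN :: "'v set set \<Rightarrow> 'v set \<Rightarrow> 'v set \<Rightarrow> 'v set set \<Rightarrow> bool" where
  "cleanN E Occ N K \<longleftrightarrow> (\<forall>f\<in>E. \<forall>y\<in>f. y \<in> N \<longrightarrow> y \<notin> Occ \<longrightarrow> f \<in> K)"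

lemma remove_stable:
  assumes st: "recont E Occ K = K" and o1: "Occ - {v} \<subseteq> Occ'" and o2: "Occ' \<subseteq> Occ"
    and vN: "v \<in> N" and cl: "closedN E Occ' N" and cn: "cleanN E Occ' N K"
  shows "recont E Occ' K = K"
proof -
  have "e \<in> recont E Occ' K" if e: "e \<in> K" for e
  proof (rule ccontr)
    assume "e \<notin> recont E Occ' K"
    then obtain x f y where x: "x \<in> e" and f: "f \<in> E - K" and y: "y \<in> f" and fc: "free_conn E Occ' x y"
      using e unfolding recont_def by auto
    have xo: "x \<notin> Occ'" and pth: "(\<lambda>a b. {a, b} \<in> E \<and> a \<notin> Occ' \<and> b \<notin> Occ')\<^sup>*\<^sup>* x y"
      using fc unfolding free_conn_def by auto
    have yo: "y \<notin> Occ'" using path_end[OF pth xo] .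
    have symR: "\<And>a b. {a, b} \<in> E \<and> a \<notin> Occ' \<and> b \<notin> Occ' \<Longrightarrow> {b, a} \<in> E \<and> b \<notin> Occ' \<and> a \<notin> Occ'"
      by (simp add: insert_commute)
    have cl': "\<forall>a b. {a, b} \<in> E \<longrightarrow> a \<in> N \<longrightarrow> a \<notin> Occ' \<longrightarrow> b \<notin> Occ' \<longrightarrow> b \<in> N"
      using cl unfolding closedN_def by blast
    have "y \<in> N"
    proof (cases "x = v")
      case True then show ?thesis using path_closed[OF _ vN cl'] pth by blast
    next
      case False
      from path_split[OF pth o1 o2] show ?thesis
      proof
        assume p0: "(\<lambda>a b. {a, b} \<in> E \<and> a \<notin> Occ \<and> b \<notin> Occ)\<^sup>*\<^sup>* x y"
        have "x \<notin> Occ" using xo False o1 by auto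
        then have "free_conn E Occ x y" using p0 unfolding free_conn_def by auto
        then have "e \<notin> recont E Occ K" using e x f y unfolding recont_def by auto
        then show ?thesis using st e by simp
      next
        assume "(\<lambda>a b. {a, b} \<in> E \<and> a \<notin> Occ' \<and> b \<notin> Occ')\<^sup>*\<^sup>* x v"
        then have "(\<lambda>a b. {a, b} \<in> E \<and> a \<notin> Occ' \<and> b \<notin> Occ')\<^sup>*\<^sup>* v y"
          by (rule rtranclp_trans[OF path_sym pth])
        then show ?thesis using path_closed[OF _ vN cl'] by blast
      qed
    qed
    then show False using cn f y yo unfolding cleanN_def by auto
  qed
  then show ?thesis using recont_sub by blast
qed

lemma drop_recont:
  assumes st: "recont E Occ K = K" and o1: "Occ - {v} \<subseteq> Occ'" and o2: "Occ' \<subseteq> Occ"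
    and vo: "v \<notin> Occ'"
    and vN: "v \<in> N" and cl: "closedN E Occ' N"
    and f0: "f0 \<in> E" "f0 \<notin> K" "v \<in> f0"
    and K': "K' = {e \<in> K. v \<notin> e}"
    and cn: "\<forall>e\<in>K'. \<forall>x\<in>e. x \<in> N \<longrightarrow> x \<in> Occ'"
  shows "recont E Occ' K = K'"
proof -
  have sub: "recont E Occ' K \<subseteq> K'"
  proof
    fix e assume e: "e \<in> recont E Occ' K"
    then have eK: "e \<in> K" using recont_sub by blast
    have "v \<notin> e"
    proof
      assume ve: "v \<in> e"
      have "free_conn E Occ' v v" using vo unfolding free_conn_def by auto
      then have "e \<notin> recont E Occ' K" using ve f0 unfolding recont_def by blast
      then show False using e by simp
    qed
    then show "e \<in> K'" using K' eK by simp
  qed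
  have "e \<in> recont E Occ' K" if e: "e \<in> K'" for e
  proof (rule ccontr)
    have eK: "e \<in> K" and ve: "v \<notin> e" using e K' by auto
    assume "e \<notin> recont E Occ' K"
    then obtain x f y where x: "x \<in> e" and f: "f \<in> E - K" and y: "y \<in> f" and fc: "free_conn E Occ' x y"
      using eK unfolding recont_def by auto
    have xo: "x \<notin> Occ'" and pth: "(\<lambda>a b. {a, b} \<in> E \<and> a \<notin> Occ' \<and> b \<notin> Occ')\<^sup>*\<^sup>* x y"
      using fc unfolding free_conn_def by auto
    have symR: "\<And>a b. {a, b} \<in> E \<and> a \<notin> Occ' \<and> b \<notin> Occ' \<Longrightarrow> {b, a} \<in> E \<and> b \<notin> Occ' \<and> a \<notin> Occ'"
      by (simp add: insert_commute)
    have cl': "\<forall>a b. {a, b} \<in> E \<longrightarrow> a \<in> N \<longrightarrow> a \<notin> Occ' \<longrightarrow> b \<notin> Occ' \<longrightarrow> b \<in> N"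
      using cl unfolding closedN_def by blast
    have xv: "x \<noteq> v" using x ve by auto
    from path_split[OF pth o1 o2] show False
    proof
      assume p0: "(\<lambda>a b. {a, b} \<in> E \<and> a \<notin> Occ \<and> b \<notin> Occ)\<^sup>*\<^sup>* x y"
      have "x \<notin> Occ" using xo xv o1 by auto
      then have "free_conn E Occ x y" using p0 unfolding free_conn_def by auto
      then have "e \<notin> recont E Occ K" using eK x f y unfolding recont_def by auto
      then show False using st eK by simp
    next
      assume "(\<lambda>a b. {a, b} \<in> E \<and> a \<notin> Occ' \<and> b \<notin> Occ')\<^sup>*\<^sup>* x v"
      then have "(\<lambda>a b. {a, b} \<in> E \<and> a \<notin> Occ' \<and> b \<notin> Occ')\<^sup>*\<^sup>* v x"
        by (rule path_sym)
      then have "x \<in> N" using path_closed[OF _ vN cl'] by blast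
      then show False using cn e x xo by blast
    qed
  qed
  then show ?thesis using sub by blast
qed



definition Ed :: "nat \<Rightarrow> tv \<Rightarrow> tv \<Rightarrow> bool" where
  "Ed l a b \<longleftrightarrow> (\<exists>i j. i \<in> {1, 2} \<and> j < 3 \<and> a = Q i \<and> b = A i j)
    \<or> (\<exists>i j k. i \<in> {1, 2} \<and> j < 3 \<and> k < 3 \<and> a = A i j \<and> b = B i j k)
    \<or> (a = Q 1 \<and> b = Pv 1) \<or> (a = Pv 1 \<and> b = V 0) \<or> (a = V 0 \<and> b = Pv 3) \<or> (a = Pv 3 \<and> b = Q 2)
    \<or> (\<exists>x. x \<le> l \<and> a = V x \<and> b = V (Suc x))
    \<or> (\<exists>x k. 1 \<le> x \<and> x \<le> l \<and> k < 2 \<and> a = V x \<and> b = W x k)"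

lemma less2: "(k::nat) < 2 \<longleftrightarrow> k = 0 \<or> k = 1" by auto

lemma lab_Ed: "(e, k) \<in> T_labeled l \<Longrightarrow> \<exists>a b. e = {a, b} \<and> Ed l a b"
  unfolding T_labeled_def
  apply (elim UnE CollectE exE conjE insertE emptyE)
  apply (simp_all only: prod.inject)
  apply ((rule exI, rule exI, rule conjI, rule refl, force simp: Ed_def)+)
  done

lemma T_edges_cases: "e \<in> T_edges l \<Longrightarrow> \<exists>a b. e = {a, b} \<and> Ed l a b"
  unfolding T_edges_def using lab_Ed by force

lemma labQA: "i = 1 \<or> i = 2 \<Longrightarrow> j < 3 \<Longrightarrow> ({Q i, A i j}, 1) \<in> T_labeled l"
  unfolding T_labeled_def by (rule UnI1, rule UnI1, rule UnI1, rule UnI1, rule UnI1, rule CollectI, rule exI[of _ i], rule exI[of _ j]) simp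
lemma labAB: "i = 1 \<or> i = 2 \<Longrightarrow> j < 3 \<Longrightarrow> k < 3 \<Longrightarrow> ({A i j, B i j k}, 2) \<in> T_labeled l"
  unfolding T_labeled_def by (rule UnI1, rule UnI1, rule UnI1, rule UnI1, rule UnI2, rule CollectI, rule exI[of _ i], rule exI[of _ j], rule exI[of _ k]) simp
lemma labP: "({Q 1, Pv 1}, 3) \<in> T_labeled l" "({Pv 1, V 0}, 2) \<in> T_labeled l"
  "({V 0, Pv 3}, 2) \<in> T_labeled l" "({Pv 3, Q 2}, 3) \<in> T_labeled l"
  unfolding T_labeled_def by (rule UnI1, rule UnI1, rule UnI1, rule UnI2, simp)+
lemma labVV: "x \<le> l \<Longrightarrow> ({V x, V (Suc x)}, x mod 3 + 1) \<in> T_labeled l"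
  unfolding T_labeled_def by (rule UnI1, rule UnI1, rule UnI2, rule CollectI, rule exI[of _ x]) simp
lemma labW0: "1 \<le> x \<Longrightarrow> x \<le> l \<Longrightarrow> ({V x, W x 0}, x mod 3 + 1) \<in> T_labeled l"
  unfolding T_labeled_def by (rule UnI1, rule UnI2, rule CollectI, rule exI[of _ x]) simp
lemma labW1: "1 \<le> x \<Longrightarrow> x \<le> l \<Longrightarrow> ({V x, W x 1}, (x - 1) mod 3 + 1) \<in> T_labeled l"
  unfolding T_labeled_def by (rule UnI2, rule CollectI, rule exI[of _ x]) simp

lemma lab_edge: "(e, k) \<in> T_labeled l \<Longrightarrow> e \<in> T_edges l"
  unfolding T_edges_def by (rule image_eqI[where x="(e,k)"]) auto

lemma lab_unique: "(e, k) \<in> T_labeled l \<Longrightarrow> (e, k') \<in> T_labeled l \<Longrightarrow> k = k'"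
  unfolding T_labeled_def
  apply (elim UnE CollectE exE conjE insertE emptyE)
  apply (simp_all add: doubleton_eq_iff)
  apply auto
  done

lemma color_eq: "(e, k) \<in> T_labeled l \<Longrightarrow> T_color l e = k"
  unfolding T_color_def by (rule the_equality) (auto intro: lab_unique)

lemma eW: "1 \<le> x \<Longrightarrow> x \<le> l \<Longrightarrow> k < 2 \<Longrightarrow> {V x, W x k} \<in> T_edges l"
  using lab_edge[OF labW0] lab_edge[OF labW1] by (auto simp: less2)

lemma Ed_edge: "Ed l a b \<Longrightarrow> {a, b} \<in> T_edges l"
  unfolding Ed_def
  apply (elim disjE exE conjE)
  apply (simp_all only:)
  apply (auto intro!: lab_edge[OF labQA] lab_edge[OF labAB] lab_edge[OF labP(1)] lab_edge[OF labP(2)]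
     lab_edge[OF labP(3)] lab_edge[OF labP(4)] lab_edge[OF labVV] eW)
  apply (insert lab_edge[OF labP(1)] lab_edge[OF labP(2)])
  apply simp_all
  done

lemma edge_iff: "{a, b} \<in> T_edges l \<longleftrightarrow> Ed l a b \<or> Ed l b a"
proof
  assume "{a, b} \<in> T_edges l"
  then obtain a' b' where "{a, b} = {a', b'}" "Ed l a' b'" using T_edges_cases by blast
  then show "Ed l a b \<or> Ed l b a" by (auto simp: doubleton_eq_iff)
next
  assume "Ed l a b \<or> Ed l b a"
  then show "{a, b} \<in> T_edges l" using Ed_edge by (metis insert_commute)
qed



lemma recont_idem:
  assumes "\<forall>f\<in>E. \<exists>a b. f = {a, b}"
  shows "recont E Occ (recont E Occ K) = recont E Occ K"
proof -
  let ?K' = "recont E Occ K"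
  have "e \<in> recont E Occ ?K'" if e: "e \<in> ?K'" for e
  proof (rule ccontr)
    assume "e \<notin> recont E Occ ?K'"
    then have "\<exists>x\<in>e. \<exists>f\<in>E - ?K'. \<exists>y\<in>f. free_conn E Occ x y"
      using e unfolding recont_def[of E Occ ?K'] by blast
    then obtain x f y where x: "x \<in> e" and f: "f \<in> E - ?K'" and y: "y \<in> f" and fc: "free_conn E Occ x y"
      by blast
    have eK: "e \<in> K" using e recont_sub by blast
    show False
    proof (cases "f \<in> K")
      case False
      then have "e \<notin> ?K'" using x f y fc eK unfolding recont_def by blast
      then show False using e by simp
    next
      case True
      then have "f \<notin> ?K'" using f by simp
      then obtain x' g y' where x': "x' \<in> f" and g: "g \<in> E - K" and y': "y' \<in> g" and fc': "free_conn E Occ x' y'"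
        using True unfolding recont_def by blast
      have p1: "(\<lambda>a b. {a, b} \<in> E \<and> a \<notin> Occ \<and> b \<notin> Occ)\<^sup>*\<^sup>* x y" and xo: "x \<notin> Occ"
        using fc unfolding free_conn_def by auto
      have yo: "y \<notin> Occ" using path_end[OF p1 xo] .
      have p2: "(\<lambda>a b. {a, b} \<in> E \<and> a \<notin> Occ \<and> b \<notin> Occ)\<^sup>*\<^sup>* x' y'" and xo': "x' \<notin> Occ"
        using fc' unfolding free_conn_def by auto
      have p3: "(\<lambda>a b. {a, b} \<in> E \<and> a \<notin> Occ \<and> b \<notin> Occ)\<^sup>*\<^sup>* y x'"
      proof (cases "y = x'")
        case True then show ?thesis by simp
      next
        case False
        obtain a b where ab: "f = {a, b}" using assms f by blast
        then have "{y, x'} = f" using y x' False by auto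
        then show ?thesis using f yo xo' by auto
      qed
      have "free_conn E Occ x y'" using xo rtranclp_trans[OF rtranclp_trans[OF p1 p3] p2]
        unfolding free_conn_def by auto
      then have "e \<notin> ?K'" using x g y' eK unfolding recont_def by blast
      then show False using e by simp
    qed
  qed
  then show ?thesis using recont_sub by blast
qed

lemma T_doubleton: "\<forall>f\<in>T_edges l. \<exists>a b. f = {a, b}"
  using T_edges_cases by blast

definition P :: "tv option \<Rightarrow> tv option \<Rightarrow> tv option \<Rightarrow> nat \<Rightarrow> tv option" where
  "P o1 o2 o3 = (\<lambda>j. if j = 1 then o1 else if j = 2 then o2 else if j = 3 then o3 else None)"

lemma P_app[simp]: "P o1 o2 o3 1 = o1" "P o1 o2 o3 2 = o2" "P o1 o2 o3 3 = o3"
  by (simp_all add: P_def)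

lemma P_app1[simp]: "P o1 o2 o3 (Suc 0) = o1"
  by (simp add: P_def)

lemma P_upd1[simp]: "(P o1 o2 o3)(Suc 0 := w) = P w o2 o3"
  by (auto simp: P_def fun_eq_iff)

lemma P_upd[simp]: "(P o1 o2 o3)(1 := w) = P w o2 o3" "(P o1 o2 o3)(2 := w) = P o1 w o3"
  "(P o1 o2 o3)(3 := w) = P o1 o2 w"
  by (auto simp: P_def fun_eq_iff)

lemma occP[simp]: "occupied (P o1 o2 o3) = set_option o1 \<union> set_option o2 \<union> set_option o3"
proof -
  have "v \<in> occupied (P o1 o2 o3) \<longleftrightarrow> v \<in> set_option o1 \<union> set_option o2 \<union> set_option o3" for v
  proof
    assume "v \<in> occupied (P o1 o2 o3)"
    then obtain j where "P o1 o2 o3 j = Some v" unfolding occupied_def by auto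
    then show "v \<in> set_option o1 \<union> set_option o2 \<union> set_option o3"
      unfolding P_def by (auto split: if_splits)
  next
    assume "v \<in> set_option o1 \<union> set_option o2 \<union> set_option o3"
    then have "P o1 o2 o3 1 = Some v \<or> P o1 o2 o3 2 = Some v \<or> P o1 o2 o3 3 = Some v"
      unfolding P_def by auto
    then show "v \<in> occupied (P o1 o2 o3)" unfolding occupied_def by blast
  qed
  then show ?thesis by blast
qed

definition stbl :: "nat \<Rightarrow> (nat \<Rightarrow> tv option) \<times> tv set set \<Rightarrow> bool" where
  "stbl l st \<longleftrightarrow> recont (T_edges l) (occupied (fst st)) (snd st) = snd st"

definition ok :: "nat \<Rightarrow> (nat \<Rightarrow> tv option) \<times> tv set set \<Rightarrow> tv move list \<Rightarrow> (nat \<Rightarrow> tv option) \<times> tv set set \<Rightarrow> bool" where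
  "ok l s ms s' \<longleftrightarrow> run (T_edges l) (T_color l) {1, 2, 3} (\<lambda>j. j) s ms = Some s' \<and> stbl l s'"

lemma run_append: "run E c S ct st (xs @ ys) = (case run E c S ct st xs of None \<Rightarrow> None | Some st' \<Rightarrow> run E c S ct st' ys)"
  by (induction xs arbitrary: st) (auto split: option.splits)

lemma ok_trans: "ok l s xs s1 \<Longrightarrow> ok l s1 ys s2 \<Longrightarrow> ok l s (xs @ ys) s2"
  unfolding ok_def by (simp add: run_append)

lemma ok_nil: "stbl l s \<Longrightarrow> ok l s [] s"
  unfolding ok_def by simp

lemma vcol: "{v, w} \<in> T_edges l \<Longrightarrow> T_color l {v, w} = j \<Longrightarrow> j \<in> vcolors (T_edges l) (T_color l) v"
  unfolding vcolors_def by blast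

lemma occ_upd_sub: "pos j = None \<Longrightarrow> occupied pos \<subseteq> occupied (pos(j := Some v))"
proof
  fix w assume "pos j = None" "w \<in> occupied pos"
  then obtain i where pi: "pos i = Some w" unfolding occupied_def by auto
  have "i \<noteq> j" using \<open>pos j = None\<close> pi by auto
  then have "(pos(j := Some v)) i = Some w" using pi by simp
  then show "w \<in> occupied (pos(j := Some v))" unfolding occupied_def by blast
qed

lemma occ_sub_upd: "occupied (pos(j := w)) \<subseteq> set_option w \<union> occupied pos"
proof
  fix x assume "x \<in> occupied (pos(j := w))"
  then obtain i where "(pos(j := w)) i = Some x" unfolding occupied_def by auto
  then show "x \<in> set_option w \<union> occupied pos" unfolding occupied_def by (cases "i = j") auto
qed

lemma occ_upd_sup: "pos j = Some u \<Longrightarrow> occupied pos - {u} \<subseteq> occupied (pos(j := w))"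
proof
  fix x assume a: "pos j = Some u" "x \<in> occupied pos - {u}"
  then obtain i where pi: "pos i = Some x" unfolding occupied_def by auto
  have "i \<noteq> j" using a pi by auto
  then have "(pos(j := w)) i = Some x" using pi by simp
  then show "x \<in> occupied (pos(j := w))" unfolding occupied_def by blast
qed

lemma occ_keep: "pos i = Some u \<Longrightarrow> i \<noteq> j \<Longrightarrow> u \<in> occupied (pos(j := w))"
  unfolding occupied_def by (rule CollectI, rule exI[of _ i]) simp

lemma occ_new: "v \<in> occupied (pos(j := Some v))"
  unfolding occupied_def by (rule CollectI, rule exI[of _ j]) simp

lemma occ_in: "pos j = Some u \<Longrightarrow> u \<in> occupied pos"
  unfolding occupied_def by blast

lemma ok_place:
  assumes "stbl l (pos, K)" "j \<in> {1, 2, 3}" "pos j = None" "{v, w} \<in> T_edges l" "T_color l {v, w} = j"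
    "pos' = pos(j := Some v)"
  shows "ok l (pos, K) [Place j v] (pos', K)"
proof -
  have "occupied pos \<subseteq> occupied pos'" using occ_upd_sub[of pos j v, OF assms(3)] assms(6) by simp
  then have r: "recont (T_edges l) (occupied pos') K = K"
    using add_stable[of "T_edges l" "occupied pos" K "occupied pos'" K] assms(1)
    unfolding stbl_def by auto
  have "j \<in> vcolors (T_edges l) (T_color l) v" using vcol assms by blast
  then show ?thesis using assms r unfolding ok_def stbl_def by simp
qed

lemma ok_remove_keep:
  assumes "stbl l (pos, K)" "j \<in> {1, 2, 3}" "pos j = Some u" "pos i = Some u" "i \<noteq> j"
    "pos' = pos(j := None)"
  shows "ok l (pos, K) [Remove j] (pos', K)"
proof -
  have "occupied pos' = occupied pos"
    using occ_sub_upd[of pos j None] occ_upd_sup[of pos j u None, OF assms(3)] occ_keep[of pos i u j None, OF assms(4,5)]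
      assms(3,6) by auto
  then show ?thesis using assms unfolding ok_def stbl_def by simp
qed

lemma ok_remove_free:
  assumes "stbl l (pos, K)" "j \<in> {1, 2, 3}" "pos j = Some u" "pos' = pos(j := None)"
    "u \<in> N" "closedN (T_edges l) (occupied pos') N" "cleanN (T_edges l) (occupied pos') N K"
  shows "ok l (pos, K) [Remove j] (pos', K)"
proof -
  have o1: "occupied pos - {u} \<subseteq> occupied pos'" and o2: "occupied pos' \<subseteq> occupied pos"
    using occ_sub_upd[of pos j None] occ_upd_sup[of pos j u None, OF assms(3)] assms(4) by auto
  have "recont (T_edges l) (occupied pos') K = K"
    using remove_stable[OF _ o1 o2 assms(5-7)] assms(1) unfolding stbl_def by simp
  then show ?thesis using assms unfolding ok_def stbl_def by simp
qed

lemma ok_remove_drop: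
  assumes "stbl l (pos, K)" "j \<in> {1, 2, 3}" "pos j = Some u" "pos' = pos(j := None)"
    "u \<notin> occupied pos'" "u \<in> N" "closedN (T_edges l) (occupied pos') N"
    "f0 \<in> T_edges l" "f0 \<notin> K" "u \<in> f0" "K' = {e \<in> K. u \<notin> e}"
    "\<forall>e\<in>K'. \<forall>x\<in>e. x \<in> N \<longrightarrow> x \<in> occupied pos'"
  shows "ok l (pos, K) [Remove j] (pos', K')"
proof -
  have o1: "occupied pos - {u} \<subseteq> occupied pos'" and o2: "occupied pos' \<subseteq> occupied pos"
    using occ_sub_upd[of pos j None] occ_upd_sup[of pos j u None, OF assms(3)] assms(4) by auto
  have r: "recont (T_edges l) (occupied pos') K = K'"
    using drop_recont[OF _ o1 o2 assms(5,6,7,8,9,10,11,12)] assms(1) unfolding stbl_def by simp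
  have "recont (T_edges l) (occupied pos') K' = K'"
    using recont_idem[OF T_doubleton, of l "occupied pos'" K] r by simp
  then show ?thesis using assms r unfolding ok_def stbl_def by simp
qed

lemma ok_slide_keep:
  assumes "stbl l (pos, K)" "j \<in> {1, 2, 3}" "pos j = Some u" "pos i = Some u" "i \<noteq> j"
    "{u, v} \<in> T_edges l" "T_color l {u, v} = j" "pos' = pos(j := Some v)"
  shows "ok l (pos, K) [Slide j u v] (pos', K \<union> {{u, v}})"
proof -
  have occ: "occupied pos \<subseteq> occupied pos'" "u \<in> occupied pos'" "v \<in> occupied pos'"
    using occ_upd_sup[of pos j u "Some v", OF assms(3)] occ_keep[of pos i u j "Some v", OF assms(4,5)]
      occ_new[where pos=pos and j=j and v=v] assms(8) by auto
  have "recont (T_edges l) (occupied pos') (K \<union> {{u, v}}) = K \<union> {{u, v}}"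
    using add_stable[of "T_edges l" "occupied pos" K "occupied pos'" "K \<union> {{u, v}}"] assms(1) occ
    unfolding stbl_def by auto
  then show ?thesis using assms unfolding ok_def stbl_def by simp
qed

lemma ok_slide_free:
  assumes "stbl l (pos, K)" "j \<in> {1, 2, 3}" "pos j = Some u"
    "{u, v} \<in> T_edges l" "T_color l {u, v} = j" "pos' = pos(j := Some v)"
    "u \<in> N" "closedN (T_edges l) (occupied pos') N" "cleanN (T_edges l) (occupied pos') N (K \<union> {{u, v}})"
  shows "ok l (pos, K) [Slide j u v] (pos', K \<union> {{u, v}})"
proof -
  let ?O1 = "insert v (occupied pos)"
  have uo: "u \<in> occupied pos" using assms(3) unfolding occupied_def by auto
  have s1: "recont (T_edges l) ?O1 (K \<union> {{u, v}}) = K \<union> {{u, v}}"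
    using add_stable[of "T_edges l" "occupied pos" K ?O1 "K \<union> {{u, v}}"] assms(1) uo
    unfolding stbl_def by auto
  have o1: "?O1 - {u} \<subseteq> occupied pos'" and o2: "occupied pos' \<subseteq> ?O1"
    using occ_sub_upd[of pos j "Some v"] occ_upd_sup[of pos j u "Some v", OF assms(3)]
      occ_new[where pos=pos and j=j and v=v] assms(6) by auto
  have "recont (T_edges l) (occupied pos') (K \<union> {{u, v}}) = K \<union> {{u, v}}"
    using remove_stable[OF s1 o1 o2 assms(7-9)] .
  then show ?thesis using assms unfolding ok_def stbl_def by simp
qed



lemma closedN_T:
  assumes "\<And>a b. Ed l a b \<or> Ed l b a \<Longrightarrow> a \<in> N \<Longrightarrow> a \<notin> Occ \<Longrightarrow> b \<notin> Occ \<Longrightarrow> b \<in> N"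
  shows "closedN (T_edges l) Occ N"
  unfolding closedN_def using assms edge_iff by blast

lemma cleanN_T:
  assumes "\<And>a b. Ed l a b \<Longrightarrow> (a \<in> N \<and> a \<notin> Occ) \<or> (b \<in> N \<and> b \<notin> Occ) \<Longrightarrow> {a, b} \<in> K"
  shows "cleanN (T_edges l) Occ N K"
  unfolding cleanN_def
proof (intro ballI impI)
  fix f y assume f: "f \<in> T_edges l" and y: "y \<in> f" "y \<in> N" "y \<notin> Occ"
  then obtain a b where "f = {a, b}" "Ed l a b" using T_edges_cases by blast
  then show "f \<in> K" using assms y by auto
qed

lemma ok_cong: "ok l s ms s' \<Longrightarrow> s' = s'' \<Longrightarrow> ok l s ms s''" by simp

lemma ok_cong2: "ok l s ms s' \<Longrightarrow> ms = ms' \<Longrightarrow> ok l s ms' s'" by simp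

lemma colQA: "i = 1 \<or> i = 2 \<Longrightarrow> j < 3 \<Longrightarrow> T_color l {Q i, A i j} = 1"
  by (rule color_eq[OF labQA])
lemma colAB: "i = 1 \<or> i = 2 \<Longrightarrow> j < 3 \<Longrightarrow> k < 3 \<Longrightarrow> T_color l {A i j, B i j k} = 2"
  by (rule color_eq[OF labAB])
lemma edQA: "i = 1 \<or> i = 2 \<Longrightarrow> j < 3 \<Longrightarrow> {Q i, A i j} \<in> T_edges l"
  by (rule lab_edge[OF labQA])
lemma edAB: "i = 1 \<or> i = 2 \<Longrightarrow> j < 3 \<Longrightarrow> k < 3 \<Longrightarrow> {A i j, B i j k} \<in> T_edges l"
  by (rule lab_edge[OF labAB])

lemma lt3: "(0::nat) < 3" "(1::nat) < 3" "(2::nat) < 3" by simp_all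

lemma leaf_ok:
  assumes st: "stbl l (P (Some (A i j)) None (Some (Q i)), K)" and i: "i = 1 \<or> i = 2" and j: "j < 3" and k: "k < 3"
  shows "ok l (P (Some (A i j)) None (Some (Q i)), K) [Place 2 (A i j), Slide 2 (A i j) (B i j k), Remove 2]
             (P (Some (A i j)) None (Some (Q i)), K \<union> {{A i j, B i j k}})"
proof -
  have s1: "ok l (P (Some (A i j)) None (Some (Q i)), K) [Place 2 (A i j)] (P (Some (A i j)) (Some (A i j)) (Some (Q i)), K)"
    by (rule ok_place[OF st _ _ edAB[OF i j k] colAB[OF i j k]]) auto
  then have st1: "stbl l (P (Some (A i j)) (Some (A i j)) (Some (Q i)), K)" unfolding ok_def by simp
  have s2: "ok l (P (Some (A i j)) (Some (A i j)) (Some (Q i)), K) [Slide 2 (A i j) (B i j k)]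
     (P (Some (A i j)) (Some (B i j k)) (Some (Q i)), K \<union> {{A i j, B i j k}})"
    by (rule ok_slide_keep[OF st1 _ _ _ _ edAB[OF i j k] colAB[OF i j k], where i=1]) auto
  then have st2: "stbl l (P (Some (A i j)) (Some (B i j k)) (Some (Q i)), K \<union> {{A i j, B i j k}})" unfolding ok_def by simp
  have s3: "ok l (P (Some (A i j)) (Some (B i j k)) (Some (Q i)), K \<union> {{A i j, B i j k}}) [Remove 2]
     (P (Some (A i j)) None (Some (Q i)), K \<union> {{A i j, B i j k}})"
  proof (rule ok_remove_free[OF st2, where N="{B i j k}"])
    show "closedN (T_edges l) (occupied (P (Some (A i j)) None (Some (Q i)))) {B i j k}"
      by (rule closedN_T) (auto simp: Ed_def)
    show "cleanN (T_edges l) (occupied (P (Some (A i j)) None (Some (Q i)))) {B i j k} (K \<union> {{A i j, B i j k}})"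
      by (rule cleanN_T) (auto simp: Ed_def)
  qed auto
  show ?thesis using ok_trans[OF s1 ok_trans[OF s2 s3]] by simp
qed

definition TEj :: "nat \<Rightarrow> nat \<Rightarrow> tv set set" where
  "TEj i j = {{Q i, A i j}, {A i j, B i j 0}, {A i j, B i j 1}, {A i j, B i j 2}}"

definition jmoves :: "nat \<Rightarrow> nat \<Rightarrow> tv move list" where
  "jmoves i j = [Place 1 (Q i), Slide 1 (Q i) (A i j)]
     @ [Place 2 (A i j), Slide 2 (A i j) (B i j 0), Remove 2]
     @ [Place 2 (A i j), Slide 2 (A i j) (B i j 1), Remove 2]
     @ [Place 2 (A i j), Slide 2 (A i j) (B i j 2), Remove 2]
     @ [Remove 1]"

lemma j_ok:
  assumes st: "stbl l (P None None (Some (Q i)), K)" and i: "i = 1 \<or> i = 2" and j: "j < 3"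
  shows "ok l (P None None (Some (Q i)), K) (jmoves i j) (P None None (Some (Q i)), K \<union> TEj i j)"
proof -
  have s1: "ok l (P None None (Some (Q i)), K) [Place 1 (Q i)] (P (Some (Q i)) None (Some (Q i)), K)"
    by (rule ok_place[OF st _ _ edQA[OF i j] colQA[OF i j]]) auto
  then have st1: "stbl l (P (Some (Q i)) None (Some (Q i)), K)" unfolding ok_def by simp
  have s2: "ok l (P (Some (Q i)) None (Some (Q i)), K) [Slide 1 (Q i) (A i j)]
     (P (Some (A i j)) None (Some (Q i)), K \<union> {{Q i, A i j}})"
    by (rule ok_slide_keep[OF st1 _ _ _ _ edQA[OF i j] colQA[OF i j], where i=3]) auto
  then have st2: "stbl l (P (Some (A i j)) None (Some (Q i)), K \<union> {{Q i, A i j}})" unfolding ok_def by simp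
  note s3 = leaf_ok[OF st2 i j lt3(1)]
  then have st3: "stbl l (P (Some (A i j)) None (Some (Q i)), K \<union> {{Q i, A i j}} \<union> {{A i j, B i j 0}})" unfolding ok_def by simp
  note s4 = leaf_ok[OF st3 i j lt3(2)]
  then have st4: "stbl l (P (Some (A i j)) None (Some (Q i)), K \<union> {{Q i, A i j}} \<union> {{A i j, B i j 0}} \<union> {{A i j, B i j 1}})" unfolding ok_def by simp
  note s5 = leaf_ok[OF st4 i j lt3(3)]
  then have st5: "stbl l (P (Some (A i j)) None (Some (Q i)), K \<union> {{Q i, A i j}} \<union> {{A i j, B i j 0}} \<union> {{A i j, B i j 1}} \<union> {{A i j, B i j 2}})" unfolding ok_def by simp
  have s6: "ok l (P (Some (A i j)) None (Some (Q i)), K \<union> {{Q i, A i j}} \<union> {{A i j, B i j 0}} \<union> {{A i j, B i j 1}} \<union> {{A i j, B i j 2}}) [Remove 1]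
     (P None None (Some (Q i)), K \<union> {{Q i, A i j}} \<union> {{A i j, B i j 0}} \<union> {{A i j, B i j 1}} \<union> {{A i j, B i j 2}})"
  proof (rule ok_remove_free[OF st5, where N="{A i j, B i j 0, B i j 1, B i j 2}"])
    show "closedN (T_edges l) (occupied (P None None (Some (Q i)))) {A i j, B i j 0, B i j 1, B i j 2}"
      by (rule closedN_T) (auto simp: Ed_def)
    show "cleanN (T_edges l) (occupied (P None None (Some (Q i)))) {A i j, B i j 0, B i j 1, B i j 2}
      (K \<union> {{Q i, A i j}} \<union> {{A i j, B i j 0}} \<union> {{A i j, B i j 1}} \<union> {{A i j, B i j 2}})"
      by (rule cleanN_T) (auto simp: Ed_def less_Suc_eq numeral_3_eq_3)
  qed auto
  have "ok l (P None None (Some (Q i)), K) ([Place 1 (Q i)] @ [Slide 1 (Q i) (A i j)]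
     @ [Place 2 (A i j), Slide 2 (A i j) (B i j 0), Remove 2]
     @ [Place 2 (A i j), Slide 2 (A i j) (B i j 1), Remove 2]
     @ [Place 2 (A i j), Slide 2 (A i j) (B i j 2), Remove 2]
     @ [Remove 1]) (P None None (Some (Q i)), K \<union> {{Q i, A i j}} \<union> {{A i j, B i j 0}} \<union> {{A i j, B i j 1}} \<union> {{A i j, B i j 2}})"
    by (rule ok_trans[OF s1 ok_trans[OF s2 ok_trans[OF s3 ok_trans[OF s4 ok_trans[OF s5 s6]]]]])
  then show ?thesis unfolding jmoves_def TEj_def by (auto elim: ok_cong)
qed

definition TE :: "nat \<Rightarrow> tv set set" where
  "TE i = TEj i 0 \<union> TEj i 1 \<union> TEj i 2"

definition submoves :: "nat \<Rightarrow> tv move list" where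
  "submoves i = jmoves i 0 @ jmoves i 1 @ jmoves i 2"

lemma sub_ok:
  assumes st: "stbl l (P None None (Some (Q i)), K)" and i: "i = 1 \<or> i = 2"
  shows "ok l (P None None (Some (Q i)), K) (submoves i) (P None None (Some (Q i)), K \<union> TE i)"
proof -
  note s1 = j_ok[OF st i lt3(1)]
  then have st1: "stbl l (P None None (Some (Q i)), K \<union> TEj i 0)" unfolding ok_def by simp
  note s2 = j_ok[OF st1 i lt3(2)]
  then have st2: "stbl l (P None None (Some (Q i)), K \<union> TEj i 0 \<union> TEj i 1)" unfolding ok_def by simp
  note s3 = j_ok[OF st2 i lt3(3)]
  show ?thesis using ok_trans[OF s1 ok_trans[OF s2 s3]] unfolding submoves_def TE_def
    by (simp add: Un_assoc)
qed



definition Kbase :: "nat \<Rightarrow> tv set set" where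
  "Kbase x = TE 1 \<union> {{Q 1, Pv 1}, {Pv 1, V 0}, {V 0, Pv 3}} \<union> {{V y, V (Suc y)} | y. y < x}
     \<union> {{V y, W y k} | y k. 1 \<le> y \<and> y < x \<and> k < 2}"

definition bigN :: "nat \<Rightarrow> tv set" where
  "bigN x = {v. (\<exists>j. v = A 1 j) \<or> (\<exists>j k. v = B 1 j k) \<or> v = Q 1 \<or> (\<exists>n. v = Pv n)
      \<or> (\<exists>y. y \<le> x \<and> v = V y) \<or> (\<exists>y k. y \<le> x \<and> v = W y k)}"

lemma less3: "(j::nat) < 3 \<longleftrightarrow> j = 0 \<or> j = 1 \<or> j = 2" by auto

lemma TEj_sub: "j < 3 \<Longrightarrow> TEj i j \<subseteq> TE i"
proof -
  assume "j < 3"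
  then have "j = 0 \<or> j = 1 \<or> j = 2" by auto
  then show ?thesis unfolding TE_def by (elim disjE) (simp_all add: Un_assoc le_supI2)
qed

lemma TE_mem: "j < 3 \<Longrightarrow> {Q i, A i j} \<in> TE i" "j < 3 \<Longrightarrow> k < 3 \<Longrightarrow> {A i j, B i j k} \<in> TE i"
proof -
  assume j: "j < 3"
  have "{Q i, A i j} \<in> TEj i j" unfolding TEj_def by (rule insertI1)
  then show "{Q i, A i j} \<in> TE i" using TEj_sub[OF j] by blast
next
  assume j: "j < 3" and k: "k < 3"
  have "k = 0 \<or> k = 1 \<or> k = 2" using k by auto
  then have "{A i j, B i j k} \<in> TEj i j" unfolding TEj_def by (elim disjE) simp_all
  then show "{A i j, B i j k} \<in> TE i" using TEj_sub[OF j] by blast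
qed

lemma Kb_mem:
  "j < 3 \<Longrightarrow> {Q 1, A 1 j} \<in> Kbase x"
  "j < 3 \<Longrightarrow> k < 3 \<Longrightarrow> {A 1 j, B 1 j k} \<in> Kbase x"
  "{Q 1, Pv 1} \<in> Kbase x" "{Pv 1, V 0} \<in> Kbase x" "{V 0, Pv 3} \<in> Kbase x"
  "y < x \<Longrightarrow> {V y, V (Suc y)} \<in> Kbase x"
  "1 \<le> y \<Longrightarrow> y < x \<Longrightarrow> k < 2 \<Longrightarrow> {V y, W y k} \<in> Kbase x"
  unfolding Kbase_def
  subgoal by (rule UnI1, rule UnI1, rule UnI1, erule TE_mem(1))
  subgoal by (rule UnI1, rule UnI1, rule UnI1, erule TE_mem(2), assumption)
  subgoal by (rule UnI1, rule UnI1, rule UnI2, rule insertI1)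
  subgoal by (rule UnI1, rule UnI1, rule UnI2, rule insertI2, rule insertI1)
  subgoal by (rule UnI1, rule UnI1, rule UnI2, rule insertI2, rule insertI2, rule insertI1)
  subgoal by (rule UnI1, rule UnI2, rule CollectI, rule exI, rule conjI, rule refl)
  subgoal by (rule UnI2, rule CollectI, rule exI, rule exI, rule conjI, rule refl, simp)
  done

lemma notin_bigN: "Q 2 \<notin> bigN x" "A 2 j \<notin> bigN x" "B 2 j k \<notin> bigN x"
  by (simp_all add: bigN_def)

lemma in_bigN: "V y \<in> bigN x \<longleftrightarrow> y \<le> x" "W y k \<in> bigN x \<longleftrightarrow> y \<le> x"
  "A 1 j \<in> bigN x" "B 1 j k \<in> bigN x" "Q 1 \<in> bigN x" "Pv n \<in> bigN x"
  "A (Suc 0) j \<in> bigN x" "B (Suc 0) j k \<in> bigN x" "Q (Suc 0) \<in> bigN x"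
  by (auto simp: bigN_def)

lemma bigN_closed:
  assumes "V x \<in> Occ \<or> V (Suc x) \<in> Occ \<or> l < x" "Pv 3 \<in> Occ \<or> Q 2 \<in> Occ"
  shows "closedN (T_edges l) Occ (bigN x)"
proof (rule closedN_T)
  fix a b assume e: "Ed l a b \<or> Ed l b a" and a: "a \<in> bigN x" "a \<notin> Occ" and b: "b \<notin> Occ"
  have vv: "b \<in> bigN x" if "y \<le> l" "a = V y" "b = V (Suc y)" for y
  proof -
    have "y \<le> x" using a that in_bigN by simp
    moreover have "y \<noteq> x" using assms(1) a b that by auto
    ultimately show ?thesis using that in_bigN by simp
  qed
  have vv2: "b \<in> bigN x" if "a = V (Suc y)" "b = V y" for y
    using a that in_bigN by simp
  have other: "b \<in> bigN x" if "\<not> (\<exists>y. y \<le> l \<and> a = V y \<and> b = V (Suc y))"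
    "\<not> (\<exists>y. a = V (Suc y) \<and> b = V y)"
    using e a b assms that unfolding Ed_def by (auto simp: in_bigN notin_bigN)
  show "b \<in> bigN x" using vv vv2 other by blast
qed

lemma bigN_clean:
  assumes "Kbase x \<subseteq> K" "1 \<le> x \<Longrightarrow> x \<le> l \<Longrightarrow> {V x, W x 0} \<in> K \<and> {V x, W x 1} \<in> K"
    "V x \<notin> Occ \<Longrightarrow> x \<le> l \<Longrightarrow> {V x, V (Suc x)} \<in> K" "Pv 3 \<notin> Occ \<Longrightarrow> {Pv 3, Q 2} \<in> K"
  shows "cleanN (T_edges l) Occ (bigN x) K"
proof (rule cleanN_T)
  fix a b assume e: "Ed l a b" and ab: "(a \<in> bigN x \<and> a \<notin> Occ) \<or> (b \<in> bigN x \<and> b \<notin> Occ)"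
  have kb: "e \<in> Kbase x \<Longrightarrow> e \<in> K" for e using assms(1) by blast
  from e[unfolded Ed_def] show "{a, b} \<in> K"
  proof (elim disjE exE conjE)
    fix i j assume h: "i \<in> {1, 2}" "j < 3" "a = Q i" "b = A i j"
    show ?thesis
    proof (cases "i = 1")
      case True then show ?thesis using h kb[OF Kb_mem(1)[OF h(2)]] by simp
    next
      case False then have "i = 2" using h(1) by simp
      then show ?thesis using ab h notin_bigN(1,2) by simp
    qed
  next
    fix i j k assume h: "i \<in> {1, 2}" "j < 3" "k < 3" "a = A i j" "b = B i j k"
    show ?thesis
    proof (cases "i = 1")
      case True then show ?thesis using h kb[OF Kb_mem(2)[OF h(2,3)]] by simp
    next
      case False then have "i = 2" using h(1) by simp
      then show ?thesis using ab h notin_bigN(2,3) by simp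
    qed
  next
    assume "a = Q 1" "b = Pv 1" then show ?thesis using kb[OF Kb_mem(3)] by simp
  next
    assume "a = Pv 1" "b = V 0" then show ?thesis using kb[OF Kb_mem(4)] by simp
  next
    assume "a = V 0" "b = Pv 3" then show ?thesis using kb[OF Kb_mem(5)] by simp
  next
    assume "a = Pv 3" "b = Q 2" then show ?thesis using ab assms(4) notin_bigN(1) by simp
  next
    fix y assume y: "y \<le> l" "a = V y" "b = V (Suc y)"
    show ?thesis
    proof (cases "y < x")
      case True then show ?thesis using y kb[OF Kb_mem(6)[OF True]] by simp
    next
      case False
      have "Suc y \<le> x \<Longrightarrow> False" using False by simp
      then have "a \<in> bigN x \<and> a \<notin> Occ" using ab y in_bigN by auto
      then have "y = x" "V x \<notin> Occ" using False y in_bigN by auto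
      then show ?thesis using assms(3) y by simp
    qed
  next
    fix y k assume y: "1 \<le> y" "y \<le> l" "k < 2" "a = V y" "b = W y k"
    show ?thesis
    proof (cases "y < x")
      case True then show ?thesis using y kb[OF Kb_mem(7)[OF y(1) True y(3)]] by simp
    next
      case False
      then have "y = x" using ab y in_bigN by auto
      then show ?thesis using assms(2) y less2[of k] by auto
    qed
  qed
qed



lemma ok_stbl: "ok l s ms s' \<Longrightarrow> stbl l s'" unfolding ok_def by simp
lemma ok_cons: "ok l s [m] s1 \<Longrightarrow> ok l s1 ms s2 \<Longrightarrow> ok l s (m # ms) s2"
  using ok_trans[of l s "[m]" s1 ms s2] by simp

lemma edVV: "x \<le> l \<Longrightarrow> {V x, V (Suc x)} \<in> T_edges l" by (rule lab_edge[OF labVV])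
lemma colVV: "x \<le> l \<Longrightarrow> T_color l {V x, V (Suc x)} = x mod 3 + 1" by (rule color_eq[OF labVV])
lemma edW0: "1 \<le> x \<Longrightarrow> x \<le> l \<Longrightarrow> {V x, W x 0} \<in> T_edges l" by (rule lab_edge[OF labW0])
lemma colW0: "1 \<le> x \<Longrightarrow> x \<le> l \<Longrightarrow> T_color l {V x, W x 0} = x mod 3 + 1" by (rule color_eq[OF labW0])
lemma edW1: "1 \<le> x \<Longrightarrow> x \<le> l \<Longrightarrow> {V x, W x 1} \<in> T_edges l" by (rule lab_edge[OF labW1])
lemma colW1: "1 \<le> x \<Longrightarrow> x \<le> l \<Longrightarrow> T_color l {V x, W x 1} = (x - 1) mod 3 + 1" by (rule color_eq[OF labW1])
lemma colW1s: "1 \<le> x \<Longrightarrow> x \<le> l \<Longrightarrow> T_color l {V x, W x (Suc 0)} = (x - 1) mod 3 + 1"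
  using colW1 by simp

lemma edP: "{Q 1, Pv 1} \<in> T_edges l" "{Pv 1, V 0} \<in> T_edges l" "{V 0, Pv 3} \<in> T_edges l" "{Pv 3, Q 2} \<in> T_edges l"
  by (rule lab_edge[OF labP(1)], rule lab_edge[OF labP(2)], rule lab_edge[OF labP(3)], rule lab_edge[OF labP(4)])
lemma colP: "T_color l {Q 1, Pv 1} = 3" "T_color l {Pv 1, V 0} = 2" "T_color l {V 0, Pv 3} = 2" "T_color l {Pv 3, Q 2} = 3"
  by (rule color_eq[OF labP(1)], rule color_eq[OF labP(2)], rule color_eq[OF labP(3)], rule color_eq[OF labP(4)])
lemma colPs: "T_color l {Q (Suc 0), Pv (Suc 0)} = 3" "T_color l {Pv (Suc 0), V 0} = 2"
  using colP(1,2) by simp_all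

lemma swapP: "{Pv 3, V 0} = {V 0, Pv 3}" "{Q 2, Pv 3} = {Pv 3, Q 2}" by auto
lemma edQ2: "{Q 2, A 2 0} \<in> T_edges l" "T_color l {Q 2, A 2 0} = 1"
  using edQA[of 2 0 l] colQA[of 2 0 l] by simp_all

lemma W_ok:
  assumes "V x \<in> Occ" "{V x, W x k} \<in> K"
  shows "closedN (T_edges l) Occ {W x k}" "cleanN (T_edges l) Occ {W x k} K"
  using assms by (auto intro!: closedN_T cleanN_T simp: Ed_def)

lemma Pv3_ok:
  assumes "V 0 \<in> Occ" "Q 2 \<in> Occ" "{V 0, Pv 3} \<in> K" "{Pv 3, Q 2} \<in> K"
  shows "closedN (T_edges l) Occ {Pv 3}" "cleanN (T_edges l) Occ {Pv 3} K"
  using assms by (auto intro!: closedN_T cleanN_T simp: Ed_def)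

definition N1 :: "tv set" where
  "N1 = {v. v = Q 1 \<or> (\<exists>j. v = A 1 j) \<or> (\<exists>j k. v = B 1 j k)}"
definition N2 :: "tv set" where
  "N2 = {v. v = Q 2 \<or> (\<exists>j. v = A 2 j) \<or> (\<exists>j k. v = B 2 j k)}"

lemma N1_ok:
  assumes "Pv 1 \<in> Occ" "TE 1 \<subseteq> K" "{Q 1, Pv 1} \<in> K"
  shows "closedN (T_edges l) Occ N1" "cleanN (T_edges l) Occ N1 K"
proof -
  show "closedN (T_edges l) Occ N1"
    by (rule closedN_T) (use assms in \<open>auto simp: Ed_def N1_def\<close>)
  show "cleanN (T_edges l) Occ N1 K"
  proof (rule cleanN_T)
    fix a b assume e: "Ed l a b" and ab: "a \<in> N1 \<and> a \<notin> Occ \<or> b \<in> N1 \<and> b \<notin> Occ"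
    from e[unfolded Ed_def] show "{a, b} \<in> K"
    proof (elim disjE exE conjE)
      fix i j assume h: "i \<in> {1, 2}" "j < 3" "a = Q i" "b = A i j"
      then have "i = 1" using ab by (auto simp: N1_def)
      then show ?thesis using h TE_mem(1)[OF h(2), of 1] assms(2) by auto
    next
      fix i j k assume h: "i \<in> {1, 2}" "j < 3" "k < 3" "a = A i j" "b = B i j k"
      then have "i = 1" using ab by (auto simp: N1_def)
      then show ?thesis using h TE_mem(2)[OF h(2,3), of 1] assms(2) by auto
    qed (use ab assms in \<open>auto simp: N1_def\<close>)
  qed
qed

lemma N1p_ok:
  assumes "V 0 \<in> Occ" "TE 1 \<subseteq> K" "{Q 1, Pv 1} \<in> K" "{Pv 1, V 0} \<in> K"
  shows "closedN (T_edges l) Occ (insert (Pv 1) N1)" "cleanN (T_edges l) Occ (insert (Pv 1) N1) K"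
proof -
  show "closedN (T_edges l) Occ (insert (Pv 1) N1)"
    by (rule closedN_T) (use assms in \<open>auto simp: Ed_def N1_def\<close>)
  show "cleanN (T_edges l) Occ (insert (Pv 1) N1) K"
  proof (rule cleanN_T)
    fix a b assume e: "Ed l a b" and ab: "a \<in> insert (Pv 1) N1 \<and> a \<notin> Occ \<or> b \<in> insert (Pv 1) N1 \<and> b \<notin> Occ"
    from e[unfolded Ed_def] show "{a, b} \<in> K"
    proof (elim disjE exE conjE)
      fix i j assume h: "i \<in> {1, 2}" "j < 3" "a = Q i" "b = A i j"
      then have "i = 1" using ab by (auto simp: N1_def)
      then show ?thesis using h TE_mem(1)[OF h(2), of 1] assms(2) by auto
    next
      fix i j k assume h: "i \<in> {1, 2}" "j < 3" "k < 3" "a = A i j" "b = B i j k"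
      then have "i = 1" using ab by (auto simp: N1_def)
      then show ?thesis using h TE_mem(2)[OF h(2,3), of 1] assms(2) by auto
    qed (use ab assms in \<open>auto simp: N1_def\<close>)
  qed
qed

lemma N2_closed: "Pv 3 \<in> Occ \<Longrightarrow> closedN (T_edges l) Occ N2"
  by (rule closedN_T) (auto simp: Ed_def N2_def)

lemma TE1_N2: "e \<in> TE 1 \<Longrightarrow> v \<in> e \<Longrightarrow> v \<notin> N2"
  unfolding TE_def TEj_def N2_def by auto

lemma Kbase_N2: "e \<in> Kbase x \<Longrightarrow> v \<in> e \<Longrightarrow> v \<notin> N2"
  unfolding Kbase_def using TE1_N2[of e v] by (auto simp: N2_def)



lemma gen_Suc: "{f y | y. y < Suc x} = {f y | y. y < x} \<union> {f x}"
  by (auto simp: less_Suc_eq)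

lemma gen_Suc2: "1 \<le> x \<Longrightarrow> {g y k | y k. 1 \<le> y \<and> y < Suc x \<and> k < (2::nat)}
   = {g y k | y k. 1 \<le> y \<and> y < x \<and> k < 2} \<union> {g x 0} \<union> {g x 1}"
  by (auto simp: less_Suc_eq less2)

lemma gen_0: "{g y k | y k. 1 \<le> y \<and> y < (0::nat) \<and> k < (2::nat)} = {}"
  "{g y k | y k. 1 \<le> y \<and> y < Suc 0 \<and> k < (2::nat)} = {}" by auto

lemma gen_00: "{f y | y. y < (0::nat)} = {}" by auto

lemma Kbase_Suc: "1 \<le> x \<Longrightarrow> Kbase (Suc x) = Kbase x \<union> {{V x, W x 0}} \<union> {{V x, W x 1}} \<union> {{V x, V (Suc x)}}"
  unfolding Kbase_def gen_Suc[of "\<lambda>y. {V y, V (Suc y)}"] gen_Suc2[of x "\<lambda>y k. {V y, W y k}"]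
  by (simp only: Un_ac)

lemma Kbase_1: "Kbase (Suc 0) = Kbase 0 \<union> {{V 0, V (Suc 0)}}"
  unfolding Kbase_def gen_Suc[of "\<lambda>y. {V y, V (Suc y)}"] gen_0 by (simp only: Un_ac)

lemma Kbase_0: "Kbase 0 = TE 1 \<union> {{Q 1, Pv 1}, {Pv 1, V 0}, {V 0, Pv 3}}"
  unfolding Kbase_def gen_0 gen_00 by simp

definition Kx :: "nat \<Rightarrow> tv set set" where
  "Kx x = (if x mod 3 = 0 then Kbase x else Kbase x \<union> {{Pv 3, Q 2}})"

definition posx :: "nat \<Rightarrow> nat \<Rightarrow> tv option" where
  "posx x = (if x mod 3 = 1 then P (Some (V x)) None (Some (Q 2))
     else if x mod 3 = 2 then P (Some (Q 2)) (Some (V x)) None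
     else P None (Some (Pv 3)) (Some (V x)))"

lemma res1: "1 \<le> (x::nat) \<Longrightarrow> x mod 3 = 1 \<Longrightarrow> x mod 3 + 1 = 2 \<and> (x - 1) mod 3 + 1 = 1"
  by (cases x) (auto simp: mod_Suc split: if_splits)
lemma res2: "1 \<le> (x::nat) \<Longrightarrow> x mod 3 = 2 \<Longrightarrow> x mod 3 + 1 = 3 \<and> (x - 1) mod 3 + 1 = 2"
  by (cases x) (auto simp: mod_Suc split: if_splits)
lemma res0: "1 \<le> (x::nat) \<Longrightarrow> x mod 3 = 0 \<Longrightarrow> x mod 3 + 1 = 1 \<and> (x - 1) mod 3 + 1 = 3"
  by (cases x) (auto simp: mod_Suc split: if_splits)

definition blk1 :: "nat \<Rightarrow> tv move list" where
  "blk1 x = [Place 2 (V x), Slide 2 (V x) (W x 0), Remove 2, Place 2 (V x), Slide 1 (V x) (W x 1), Remove 1,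
     Place 1 (Q 2), Remove 3, Slide 2 (V x) (V (Suc x))]"

lemma blk1_ok:
  assumes x: "1 \<le> x" "x \<le> l" "x mod 3 = 1"
    and st: "stbl l (P (Some (V x)) None (Some (Q 2)), Kbase x \<union> {{Pv 3, Q 2}})"
  shows "ok l (P (Some (V x)) None (Some (Q 2)), Kbase x \<union> {{Pv 3, Q 2}}) (blk1 x)
     (P (Some (Q 2)) (Some (V (Suc x))) None, Kbase (Suc x) \<union> {{Pv 3, Q 2}})"
proof -
  have c2: "x mod 3 = 1" and c1: "(x - 1) mod 3 = 0" "(x - Suc 0) mod 3 = 0" using x(1,3) by (cases x; auto simp: mod_Suc split: if_splits)+
  define K0 where "K0 = Kbase x \<union> {{Pv 3, Q 2}}"
  have s1: "ok l (P (Some (V x)) None (Some (Q 2)), K0) [Place 2 (V x)] (P (Some (V x)) (Some (V x)) (Some (Q 2)), K0)"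
    by (rule ok_place[OF st[folded K0_def] _ _ edVV[OF x(2)]]) (auto simp: colVV[OF x(2)] c2)
  note st1 = ok_stbl[OF s1]
  have s2: "ok l (P (Some (V x)) (Some (V x)) (Some (Q 2)), K0) [Slide 2 (V x) (W x 0)]
      (P (Some (V x)) (Some (W x 0)) (Some (Q 2)), K0 \<union> {{V x, W x 0}})"
    by (rule ok_slide_keep[OF st1 _ _ _ _ edW0[OF x(1,2)], where i=1]) (auto simp: colW0[OF x(1,2)] c2)
  note st2 = ok_stbl[OF s2]
  have s3: "ok l (P (Some (V x)) (Some (W x 0)) (Some (Q 2)), K0 \<union> {{V x, W x 0}}) [Remove 2]
      (P (Some (V x)) None (Some (Q 2)), K0 \<union> {{V x, W x 0}})"
    by (rule ok_remove_free[OF st2, where N="{W x 0}"]) (auto intro!: W_ok)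
  note st3 = ok_stbl[OF s3]
  have s4: "ok l (P (Some (V x)) None (Some (Q 2)), K0 \<union> {{V x, W x 0}}) [Place 2 (V x)]
      (P (Some (V x)) (Some (V x)) (Some (Q 2)), K0 \<union> {{V x, W x 0}})"
    by (rule ok_place[OF st3 _ _ edVV[OF x(2)]]) (auto simp: colVV[OF x(2)] c2)
  note st4 = ok_stbl[OF s4]
  have s5: "ok l (P (Some (V x)) (Some (V x)) (Some (Q 2)), K0 \<union> {{V x, W x 0}}) [Slide 1 (V x) (W x 1)]
      (P (Some (W x 1)) (Some (V x)) (Some (Q 2)), K0 \<union> {{V x, W x 0}} \<union> {{V x, W x 1}})"
    by (rule ok_slide_keep[OF st4 _ _ _ _ edW1[OF x(1,2)], where i=2]) (auto simp: colW1[OF x(1,2)] colW1s[OF x(1,2)] c1)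
  note st5 = ok_stbl[OF s5]
  have s6: "ok l (P (Some (W x 1)) (Some (V x)) (Some (Q 2)), K0 \<union> {{V x, W x 0}} \<union> {{V x, W x 1}}) [Remove 1]
      (P None (Some (V x)) (Some (Q 2)), K0 \<union> {{V x, W x 0}} \<union> {{V x, W x 1}})"
    by (rule ok_remove_free[OF st5, where N="{W x 1}"]) (auto intro!: W_ok)
  note st6 = ok_stbl[OF s6]
  have s7: "ok l (P None (Some (V x)) (Some (Q 2)), K0 \<union> {{V x, W x 0}} \<union> {{V x, W x 1}}) [Place 1 (Q 2)]
      (P (Some (Q 2)) (Some (V x)) (Some (Q 2)), K0 \<union> {{V x, W x 0}} \<union> {{V x, W x 1}})"
    by (rule ok_place[OF st6 _ _ edQ2(1)]) (auto simp: edQ2)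
  note st7 = ok_stbl[OF s7]
  have s8: "ok l (P (Some (Q 2)) (Some (V x)) (Some (Q 2)), K0 \<union> {{V x, W x 0}} \<union> {{V x, W x 1}}) [Remove 3]
      (P (Some (Q 2)) (Some (V x)) None, K0 \<union> {{V x, W x 0}} \<union> {{V x, W x 1}})"
    by (rule ok_remove_keep[OF st7, where i=1]) auto
  note st8 = ok_stbl[OF s8]
  have s9: "ok l (P (Some (Q 2)) (Some (V x)) None, K0 \<union> {{V x, W x 0}} \<union> {{V x, W x 1}}) [Slide 2 (V x) (V (Suc x))]
      (P (Some (Q 2)) (Some (V (Suc x))) None, K0 \<union> {{V x, W x 0}} \<union> {{V x, W x 1}} \<union> {{V x, V (Suc x)}})"
  proof (rule ok_slide_free[OF st8 _ _ edVV[OF x(2)], where N="bigN x"])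
    show "closedN (T_edges l) (occupied (P (Some (Q 2)) (Some (V (Suc x))) None)) (bigN x)"
      by (rule bigN_closed) auto
    show "cleanN (T_edges l) (occupied (P (Some (Q 2)) (Some (V (Suc x))) None)) (bigN x)
       (K0 \<union> {{V x, W x 0}} \<union> {{V x, W x 1}} \<union> {{V x, V (Suc x)}})"
      by (rule bigN_clean) (auto simp: K0_def)
  qed (auto simp: colVV[OF x(2)] c2 in_bigN)
  have "ok l (P (Some (V x)) None (Some (Q 2)), K0) (blk1 x)
      (P (Some (Q 2)) (Some (V (Suc x))) None, K0 \<union> {{V x, W x 0}} \<union> {{V x, W x 1}} \<union> {{V x, V (Suc x)}})"
    unfolding blk1_def
    by (rule ok_cons[OF s1 ok_cons[OF s2 ok_cons[OF s3 ok_cons[OF s4 ok_cons[OF s5 ok_cons[OF s6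
          ok_cons[OF s7 ok_cons[OF s8 s9]]]]]]]])
  moreover have "K0 \<union> {{V x, W x 0}} \<union> {{V x, W x 1}} \<union> {{V x, V (Suc x)}} = Kbase (Suc x) \<union> {{Pv 3, Q 2}}"
    unfolding K0_def Kbase_Suc[OF x(1)] by blast
  ultimately show ?thesis unfolding K0_def by simp
qed

definition blk2 :: "nat \<Rightarrow> tv move list" where
  "blk2 x = [Place 3 (V x), Slide 3 (V x) (W x 0), Remove 3, Place 3 (V x), Slide 2 (V x) (W x 1), Remove 2,
     Place 2 (Pv 3), Remove 1, Slide 3 (V x) (V (Suc x))]"

lemma blk2_ok:
  assumes x: "1 \<le> x" "x \<le> l" "x mod 3 = 2"
    and st: "stbl l (P (Some (Q 2)) (Some (V x)) None, Kbase x \<union> {{Pv 3, Q 2}})"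
  shows "ok l (P (Some (Q 2)) (Some (V x)) None, Kbase x \<union> {{Pv 3, Q 2}}) (blk2 x)
     (P None (Some (Pv 3)) (Some (V (Suc x))), Kbase (Suc x))"
proof -
  have c2: "x mod 3 = 2" and c1: "(x - 1) mod 3 = 1" "(x - Suc 0) mod 3 = 1" using x(1,3) by (cases x; auto simp: mod_Suc split: if_splits)+
  define K0 where "K0 = Kbase x \<union> {{Pv 3, Q 2}}"
  have s1: "ok l (P (Some (Q 2)) (Some (V x)) None, K0) [Place 3 (V x)] (P (Some (Q 2)) (Some (V x)) (Some (V x)), K0)"
    by (rule ok_place[OF st[folded K0_def] _ _ edVV[OF x(2)]]) (auto simp: colVV[OF x(2)] c2)
  note st1 = ok_stbl[OF s1]
  have s2: "ok l (P (Some (Q 2)) (Some (V x)) (Some (V x)), K0) [Slide 3 (V x) (W x 0)]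
      (P (Some (Q 2)) (Some (V x)) (Some (W x 0)), K0 \<union> {{V x, W x 0}})"
    by (rule ok_slide_keep[OF st1 _ _ _ _ edW0[OF x(1,2)], where i=2]) (auto simp: colW0[OF x(1,2)] c2)
  note st2 = ok_stbl[OF s2]
  have s3: "ok l (P (Some (Q 2)) (Some (V x)) (Some (W x 0)), K0 \<union> {{V x, W x 0}}) [Remove 3]
      (P (Some (Q 2)) (Some (V x)) None, K0 \<union> {{V x, W x 0}})"
    by (rule ok_remove_free[OF st2, where N="{W x 0}"]) (auto intro!: W_ok)
  note st3 = ok_stbl[OF s3]
  have s4: "ok l (P (Some (Q 2)) (Some (V x)) None, K0 \<union> {{V x, W x 0}}) [Place 3 (V x)]
      (P (Some (Q 2)) (Some (V x)) (Some (V x)), K0 \<union> {{V x, W x 0}})"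
    by (rule ok_place[OF st3 _ _ edVV[OF x(2)]]) (auto simp: colVV[OF x(2)] c2)
  note st4 = ok_stbl[OF s4]
  have s5: "ok l (P (Some (Q 2)) (Some (V x)) (Some (V x)), K0 \<union> {{V x, W x 0}}) [Slide 2 (V x) (W x 1)]
      (P (Some (Q 2)) (Some (W x 1)) (Some (V x)), K0 \<union> {{V x, W x 0}} \<union> {{V x, W x 1}})"
    by (rule ok_slide_keep[OF st4 _ _ _ _ edW1[OF x(1,2)], where i=3]) (auto simp: colW1[OF x(1,2)] colW1s[OF x(1,2)] c1)
  note st5 = ok_stbl[OF s5]
  have s6: "ok l (P (Some (Q 2)) (Some (W x 1)) (Some (V x)), K0 \<union> {{V x, W x 0}} \<union> {{V x, W x 1}}) [Remove 2]
      (P (Some (Q 2)) None (Some (V x)), K0 \<union> {{V x, W x 0}} \<union> {{V x, W x 1}})"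
    by (rule ok_remove_free[OF st5, where N="{W x 1}"]) (auto intro!: W_ok)
  note st6 = ok_stbl[OF s6]
  have s7: "ok l (P (Some (Q 2)) None (Some (V x)), K0 \<union> {{V x, W x 0}} \<union> {{V x, W x 1}}) [Place 2 (Pv 3)]
      (P (Some (Q 2)) (Some (Pv 3)) (Some (V x)), K0 \<union> {{V x, W x 0}} \<union> {{V x, W x 1}})"
    by (rule ok_place[OF st6 _ _ edP(3)[folded swapP(1)]]) (auto simp: colP(3)[folded swapP(1)])
  note st7 = ok_stbl[OF s7]
  have s8: "ok l (P (Some (Q 2)) (Some (Pv 3)) (Some (V x)), K0 \<union> {{V x, W x 0}} \<union> {{V x, W x 1}}) [Remove 1]
      (P None (Some (Pv 3)) (Some (V x)), Kbase x \<union> {{V x, W x 0}} \<union> {{V x, W x 1}})"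
  proof (rule ok_remove_drop[OF st7 _ _ _ _ _ _ edQ2(1), where N=N2])
    show "closedN (T_edges l) (occupied (P None (Some (Pv 3)) (Some (V x)))) N2"
      by (rule N2_closed) simp
    show "{Q 2, A 2 0} \<notin> K0 \<union> {{V x, W x 0}} \<union> {{V x, W x 1}}"
      using Kbase_N2[of "{Q 2, A 2 0}" x "Q 2"] unfolding K0_def by (auto simp: N2_def doubleton_eq_iff)
    show "Kbase x \<union> {{V x, W x 0}} \<union> {{V x, W x 1}} = {e \<in> K0 \<union> {{V x, W x 0}} \<union> {{V x, W x 1}}. Q 2 \<notin> e}"
      using Kbase_N2[of _ x "Q 2"] unfolding K0_def by (auto simp: N2_def)
    show "\<forall>e\<in>Kbase x \<union> {{V x, W x 0}} \<union> {{V x, W x 1}}. \<forall>y\<in>e. y \<in> N2 \<longrightarrow> y \<in> occupied (P None (Some (Pv 3)) (Some (V x)))"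
      using Kbase_N2[of _ x] by (auto simp: N2_def)
  qed (auto simp: N2_def)
  note st8 = ok_stbl[OF s8]
  have s9: "ok l (P None (Some (Pv 3)) (Some (V x)), Kbase x \<union> {{V x, W x 0}} \<union> {{V x, W x 1}}) [Slide 3 (V x) (V (Suc x))]
      (P None (Some (Pv 3)) (Some (V (Suc x))), Kbase x \<union> {{V x, W x 0}} \<union> {{V x, W x 1}} \<union> {{V x, V (Suc x)}})"
  proof (rule ok_slide_free[OF st8 _ _ edVV[OF x(2)], where N="bigN x"])
    show "closedN (T_edges l) (occupied (P None (Some (Pv 3)) (Some (V (Suc x))))) (bigN x)"
      by (rule bigN_closed) auto
    show "cleanN (T_edges l) (occupied (P None (Some (Pv 3)) (Some (V (Suc x))))) (bigN x)
       (Kbase x \<union> {{V x, W x 0}} \<union> {{V x, W x 1}} \<union> {{V x, V (Suc x)}})"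
      by (rule bigN_clean) auto
  qed (auto simp: colVV[OF x(2)] c2 in_bigN)
  have "ok l (P (Some (Q 2)) (Some (V x)) None, K0) (blk2 x)
      (P None (Some (Pv 3)) (Some (V (Suc x))), Kbase x \<union> {{V x, W x 0}} \<union> {{V x, W x 1}} \<union> {{V x, V (Suc x)}})"
    unfolding blk2_def
    by (rule ok_cons[OF s1 ok_cons[OF s2 ok_cons[OF s3 ok_cons[OF s4 ok_cons[OF s5 ok_cons[OF s6
          ok_cons[OF s7 ok_cons[OF s8 s9]]]]]]]])
  then show ?thesis unfolding K0_def Kbase_Suc[OF x(1)] by simp
qed

definition blk0 :: "nat \<Rightarrow> tv move list" where
  "blk0 x = [Place 1 (V x), Slide 1 (V x) (W x 0), Remove 1, Place 1 (V x), Slide 3 (V x) (W x 1), Remove 3,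
     Place 3 (Pv 3), Slide 3 (Pv 3) (Q 2), Remove 2, Slide 1 (V x) (V (Suc x))]"

lemma blk0_ok:
  assumes x: "1 \<le> x" "x \<le> l" "x mod 3 = 0"
    and st: "stbl l (P None (Some (Pv 3)) (Some (V x)), Kbase x)"
  shows "ok l (P None (Some (Pv 3)) (Some (V x)), Kbase x) (blk0 x)
     (P (Some (V (Suc x))) None (Some (Q 2)), Kbase (Suc x) \<union> {{Pv 3, Q 2}})"
proof -
  have c2: "x mod 3 = 0" and c1: "(x - 1) mod 3 = 2" "(x - Suc 0) mod 3 = 2" using x(1,3) by (cases x; auto simp: mod_Suc split: if_splits)+
  define K0 where "K0 = Kbase x"
  have s1: "ok l (P None (Some (Pv 3)) (Some (V x)), K0) [Place 1 (V x)] (P (Some (V x)) (Some (Pv 3)) (Some (V x)), K0)"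
    by (rule ok_place[OF st[folded K0_def] _ _ edVV[OF x(2)]]) (auto simp: colVV[OF x(2)] c2)
  note st1 = ok_stbl[OF s1]
  have s2: "ok l (P (Some (V x)) (Some (Pv 3)) (Some (V x)), K0) [Slide 1 (V x) (W x 0)]
      (P (Some (W x 0)) (Some (Pv 3)) (Some (V x)), K0 \<union> {{V x, W x 0}})"
    by (rule ok_slide_keep[OF st1 _ _ _ _ edW0[OF x(1,2)], where i=3]) (auto simp: colW0[OF x(1,2)] c2)
  note st2 = ok_stbl[OF s2]
  have s3: "ok l (P (Some (W x 0)) (Some (Pv 3)) (Some (V x)), K0 \<union> {{V x, W x 0}}) [Remove 1]
      (P None (Some (Pv 3)) (Some (V x)), K0 \<union> {{V x, W x 0}})"
    by (rule ok_remove_free[OF st2, where N="{W x 0}"]) (auto intro!: W_ok)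
  note st3 = ok_stbl[OF s3]
  have s4: "ok l (P None (Some (Pv 3)) (Some (V x)), K0 \<union> {{V x, W x 0}}) [Place 1 (V x)]
      (P (Some (V x)) (Some (Pv 3)) (Some (V x)), K0 \<union> {{V x, W x 0}})"
    by (rule ok_place[OF st3 _ _ edVV[OF x(2)]]) (auto simp: colVV[OF x(2)] c2)
  note st4 = ok_stbl[OF s4]
  have s5: "ok l (P (Some (V x)) (Some (Pv 3)) (Some (V x)), K0 \<union> {{V x, W x 0}}) [Slide 3 (V x) (W x 1)]
      (P (Some (V x)) (Some (Pv 3)) (Some (W x 1)), K0 \<union> {{V x, W x 0}} \<union> {{V x, W x 1}})"
    by (rule ok_slide_keep[OF st4 _ _ _ _ edW1[OF x(1,2)], where i=1]) (auto simp: colW1[OF x(1,2)] colW1s[OF x(1,2)] c1)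
  note st5 = ok_stbl[OF s5]
  have s6: "ok l (P (Some (V x)) (Some (Pv 3)) (Some (W x 1)), K0 \<union> {{V x, W x 0}} \<union> {{V x, W x 1}}) [Remove 3]
      (P (Some (V x)) (Some (Pv 3)) None, K0 \<union> {{V x, W x 0}} \<union> {{V x, W x 1}})"
    by (rule ok_remove_free[OF st5, where N="{W x 1}"]) (auto intro!: W_ok)
  note st6 = ok_stbl[OF s6]
  have s7: "ok l (P (Some (V x)) (Some (Pv 3)) None, K0 \<union> {{V x, W x 0}} \<union> {{V x, W x 1}}) [Place 3 (Pv 3)]
      (P (Some (V x)) (Some (Pv 3)) (Some (Pv 3)), K0 \<union> {{V x, W x 0}} \<union> {{V x, W x 1}})"
    by (rule ok_place[OF st6 _ _ edP(4)]) (auto simp: colP(4))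
  note st7 = ok_stbl[OF s7]
  have s8: "ok l (P (Some (V x)) (Some (Pv 3)) (Some (Pv 3)), K0 \<union> {{V x, W x 0}} \<union> {{V x, W x 1}}) [Slide 3 (Pv 3) (Q 2)]
      (P (Some (V x)) (Some (Pv 3)) (Some (Q 2)), K0 \<union> {{V x, W x 0}} \<union> {{V x, W x 1}} \<union> {{Pv 3, Q 2}})"
    by (rule ok_slide_keep[OF st7 _ _ _ _ edP(4), where i=2]) (auto simp: colP(4))
  note st8 = ok_stbl[OF s8]
  have s9: "ok l (P (Some (V x)) (Some (Pv 3)) (Some (Q 2)), K0 \<union> {{V x, W x 0}} \<union> {{V x, W x 1}} \<union> {{Pv 3, Q 2}}) [Remove 2]
      (P (Some (V x)) None (Some (Q 2)), K0 \<union> {{V x, W x 0}} \<union> {{V x, W x 1}} \<union> {{Pv 3, Q 2}})"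
  proof (rule ok_remove_free[OF st8, where N="bigN x"])
    show "closedN (T_edges l) (occupied (P (Some (V x)) None (Some (Q 2)))) (bigN x)"
      by (rule bigN_closed) auto
    show "cleanN (T_edges l) (occupied (P (Some (V x)) None (Some (Q 2)))) (bigN x)
       (K0 \<union> {{V x, W x 0}} \<union> {{V x, W x 1}} \<union> {{Pv 3, Q 2}})"
      by (rule bigN_clean) (auto simp: K0_def)
  qed (auto simp: in_bigN)
  note st9 = ok_stbl[OF s9]
  have s10: "ok l (P (Some (V x)) None (Some (Q 2)), K0 \<union> {{V x, W x 0}} \<union> {{V x, W x 1}} \<union> {{Pv 3, Q 2}}) [Slide 1 (V x) (V (Suc x))]
      (P (Some (V (Suc x))) None (Some (Q 2)), K0 \<union> {{V x, W x 0}} \<union> {{V x, W x 1}} \<union> {{Pv 3, Q 2}} \<union> {{V x, V (Suc x)}})"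
  proof (rule ok_slide_free[OF st9 _ _ edVV[OF x(2)], where N="bigN x"])
    show "closedN (T_edges l) (occupied (P (Some (V (Suc x))) None (Some (Q 2)))) (bigN x)"
      by (rule bigN_closed) auto
    show "cleanN (T_edges l) (occupied (P (Some (V (Suc x))) None (Some (Q 2)))) (bigN x)
       (K0 \<union> {{V x, W x 0}} \<union> {{V x, W x 1}} \<union> {{Pv 3, Q 2}} \<union> {{V x, V (Suc x)}})"
      by (rule bigN_clean) (auto simp: K0_def)
  qed (auto simp: colVV[OF x(2)] c2 in_bigN)
  have "ok l (P None (Some (Pv 3)) (Some (V x)), K0) (blk0 x)
      (P (Some (V (Suc x))) None (Some (Q 2)), K0 \<union> {{V x, W x 0}} \<union> {{V x, W x 1}} \<union> {{Pv 3, Q 2}} \<union> {{V x, V (Suc x)}})"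
    unfolding blk0_def
    by (rule ok_cons[OF s1 ok_cons[OF s2 ok_cons[OF s3 ok_cons[OF s4 ok_cons[OF s5 ok_cons[OF s6
          ok_cons[OF s7 ok_cons[OF s8 ok_cons[OF s9 s10]]]]]]]]])
  moreover have "K0 \<union> {{V x, W x 0}} \<union> {{V x, W x 1}} \<union> {{Pv 3, Q 2}} \<union> {{V x, V (Suc x)}} = Kbase (Suc x) \<union> {{Pv 3, Q 2}}"
    unfolding K0_def Kbase_Suc[OF x(1)] by blast
  ultimately show ?thesis unfolding K0_def by simp
qed



definition initm :: "tv move list" where
  "initm = [Place 3 (Q 1)] @ submoves 1 @ [Slide 3 (Q 1) (Pv 1), Place 2 (Pv 1), Slide 2 (Pv 1) (V 0), Remove 3,
     Place 1 (V 0), Slide 2 (V 0) (Pv 3), Place 3 (Pv 3), Slide 3 (Pv 3) (Q 2), Remove 2, Slide 1 (V 0) (V (Suc 0))]"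

lemma stbl0: "stbl l (P None None None, {})"
  unfolding stbl_def using recont_sub by auto

lemma init_ok: "ok l (P None None None, {}) initm (posx (Suc 0), Kx (Suc 0))"
proof -
  have s1: "ok l (P None None None, {}) [Place 3 (Q 1)] (P None None (Some (Q 1)), {})"
    by (rule ok_place[OF stbl0 _ _ edP(1)]) (auto simp: colP(1) colPs)
  note st1 = ok_stbl[OF s1]
  have s2: "ok l (P None None (Some (Q 1)), {}) (submoves 1) (P None None (Some (Q 1)), {} \<union> TE 1)"
    by (rule sub_ok[OF st1]) simp
  note st2 = ok_stbl[OF s2]
  define Ka where "Ka = {} \<union> TE 1 \<union> {{Q 1, Pv 1}}"
  have s3: "ok l (P None None (Some (Q 1)), {} \<union> TE 1) [Slide 3 (Q 1) (Pv 1)] (P None None (Some (Pv 1)), Ka)"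
    unfolding Ka_def
  proof (rule ok_slide_free[OF st2 _ _ edP(1), where N=N1])
    show "closedN (T_edges l) (occupied (P None None (Some (Pv 1)))) N1" by (rule N1_ok(1)[where K="{} \<union> TE 1 \<union> {{Q 1, Pv 1}}"]) auto
    show "cleanN (T_edges l) (occupied (P None None (Some (Pv 1)))) N1 ({} \<union> TE 1 \<union> {{Q 1, Pv 1}})"
      by (rule N1_ok(2)) auto
  qed (auto simp: colP(1) colPs N1_def)
  note st3 = ok_stbl[OF s3]
  have s4: "ok l (P None None (Some (Pv 1)), Ka) [Place 2 (Pv 1)] (P None (Some (Pv 1)) (Some (Pv 1)), Ka)"
    by (rule ok_place[OF st3 _ _ edP(2)]) (auto simp: colP(2) colPs)
  note st4 = ok_stbl[OF s4]
  have s5: "ok l (P None (Some (Pv 1)) (Some (Pv 1)), Ka) [Slide 2 (Pv 1) (V 0)] (P None (Some (V 0)) (Some (Pv 1)), Ka \<union> {{Pv 1, V 0}})"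
    by (rule ok_slide_keep[OF st4 _ _ _ _ edP(2), where i=3]) (auto simp: colP(2) colPs)
  note st5 = ok_stbl[OF s5]
  have s6: "ok l (P None (Some (V 0)) (Some (Pv 1)), Ka \<union> {{Pv 1, V 0}}) [Remove 3] (P None (Some (V 0)) None, Ka \<union> {{Pv 1, V 0}})"
  proof (rule ok_remove_free[OF st5, where N="insert (Pv 1) N1"])
    show "closedN (T_edges l) (occupied (P None (Some (V 0)) None)) (insert (Pv 1) N1)" by (rule N1p_ok(1)[where K="Ka \<union> {{Pv 1, V 0}}"]) (auto simp: Ka_def)
    show "cleanN (T_edges l) (occupied (P None (Some (V 0)) None)) (insert (Pv 1) N1) (Ka \<union> {{Pv 1, V 0}})"
      by (rule N1p_ok(2)) (auto simp: Ka_def)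
  qed auto
  note st6 = ok_stbl[OF s6]
  have s7: "ok l (P None (Some (V 0)) None, Ka \<union> {{Pv 1, V 0}}) [Place 1 (V 0)] (P (Some (V 0)) (Some (V 0)) None, Ka \<union> {{Pv 1, V 0}})"
    by (rule ok_place[OF st6 _ _ edVV[of 0 l]]) (auto simp: colVV[of 0 l])
  note st7 = ok_stbl[OF s7]
  have s8: "ok l (P (Some (V 0)) (Some (V 0)) None, Ka \<union> {{Pv 1, V 0}}) [Slide 2 (V 0) (Pv 3)]
     (P (Some (V 0)) (Some (Pv 3)) None, Ka \<union> {{Pv 1, V 0}} \<union> {{V 0, Pv 3}})"
    by (rule ok_slide_keep[OF st7 _ _ _ _ edP(3), where i=1]) (auto simp: colP(3))
  note st8 = ok_stbl[OF s8]
  have s9: "ok l (P (Some (V 0)) (Some (Pv 3)) None, Ka \<union> {{Pv 1, V 0}} \<union> {{V 0, Pv 3}}) [Place 3 (Pv 3)]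
     (P (Some (V 0)) (Some (Pv 3)) (Some (Pv 3)), Ka \<union> {{Pv 1, V 0}} \<union> {{V 0, Pv 3}})"
    by (rule ok_place[OF st8 _ _ edP(4)]) (auto simp: colP(4))
  note st9 = ok_stbl[OF s9]
  have s10: "ok l (P (Some (V 0)) (Some (Pv 3)) (Some (Pv 3)), Ka \<union> {{Pv 1, V 0}} \<union> {{V 0, Pv 3}}) [Slide 3 (Pv 3) (Q 2)]
     (P (Some (V 0)) (Some (Pv 3)) (Some (Q 2)), Ka \<union> {{Pv 1, V 0}} \<union> {{V 0, Pv 3}} \<union> {{Pv 3, Q 2}})"
    by (rule ok_slide_keep[OF st9 _ _ _ _ edP(4), where i=2]) (auto simp: colP(4))
  note st10 = ok_stbl[OF s10]
  have s11: "ok l (P (Some (V 0)) (Some (Pv 3)) (Some (Q 2)), Ka \<union> {{Pv 1, V 0}} \<union> {{V 0, Pv 3}} \<union> {{Pv 3, Q 2}}) [Remove 2]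
     (P (Some (V 0)) None (Some (Q 2)), Ka \<union> {{Pv 1, V 0}} \<union> {{V 0, Pv 3}} \<union> {{Pv 3, Q 2}})"
  proof (rule ok_remove_free[OF st10, where N="{Pv 3}"])
    let ?K = "Ka \<union> {{Pv 1, V 0}} \<union> {{V 0, Pv 3}} \<union> {{Pv 3, Q 2}}"
    show "closedN (T_edges l) (occupied (P (Some (V 0)) None (Some (Q 2)))) {Pv 3}"
      by (rule Pv3_ok(1)[where K="?K"]) auto
    show "cleanN (T_edges l) (occupied (P (Some (V 0)) None (Some (Q 2)))) {Pv 3} ?K"
      by (rule Pv3_ok(2)) auto
  qed auto
  note st11 = ok_stbl[OF s11]
  have kb0: "Kbase 0 \<subseteq> Ka \<union> {{Pv 1, V 0}} \<union> {{V 0, Pv 3}} \<union> {{Pv 3, Q 2}}"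
    unfolding Kbase_0 Ka_def by blast
  have s12: "ok l (P (Some (V 0)) None (Some (Q 2)), Ka \<union> {{Pv 1, V 0}} \<union> {{V 0, Pv 3}} \<union> {{Pv 3, Q 2}}) [Slide 1 (V 0) (V (Suc 0))]
     (P (Some (V (Suc 0))) None (Some (Q 2)), Ka \<union> {{Pv 1, V 0}} \<union> {{V 0, Pv 3}} \<union> {{Pv 3, Q 2}} \<union> {{V 0, V (Suc 0)}})"
  proof (rule ok_slide_free[OF st11 _ _ edVV[of 0 l], where N="bigN 0"])
    show "closedN (T_edges l) (occupied (P (Some (V (Suc 0))) None (Some (Q 2)))) (bigN 0)"
      by (rule bigN_closed) auto
    show "cleanN (T_edges l) (occupied (P (Some (V (Suc 0))) None (Some (Q 2)))) (bigN 0)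
       (Ka \<union> {{Pv 1, V 0}} \<union> {{V 0, Pv 3}} \<union> {{Pv 3, Q 2}} \<union> {{V 0, V (Suc 0)}})"
      by (rule bigN_clean) (use kb0 in auto)
  qed (auto simp: colVV[of 0 l] in_bigN)
  have "ok l (P None None None, {}) initm
     (P (Some (V (Suc 0))) None (Some (Q 2)), Ka \<union> {{Pv 1, V 0}} \<union> {{V 0, Pv 3}} \<union> {{Pv 3, Q 2}} \<union> {{V 0, V (Suc 0)}})"
    unfolding initm_def
    by (rule ok_trans[OF s1 ok_trans[OF s2 ok_cons[OF s3 ok_cons[OF s4 ok_cons[OF s5 ok_cons[OF s6
          ok_cons[OF s7 ok_cons[OF s8 ok_cons[OF s9 ok_cons[OF s10 ok_cons[OF s11 s12]]]]]]]]]]])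
  moreover have "Ka \<union> {{Pv 1, V 0}} \<union> {{V 0, Pv 3}} \<union> {{Pv 3, Q 2}} \<union> {{V 0, V (Suc 0)}} = Kx (Suc 0)"
    unfolding Kx_def Kbase_1 Kbase_0 Ka_def by auto
  moreover have "posx (Suc 0) = P (Some (V (Suc 0))) None (Some (Q 2))" unfolding posx_def by simp
  ultimately show ?thesis by simp
qed

definition block :: "nat \<Rightarrow> tv move list" where
  "block x = (if x mod 3 = 1 then blk1 x else if x mod 3 = 2 then blk2 x else blk0 x)"

lemma modSuc: "x mod 3 = 1 \<Longrightarrow> Suc x mod 3 = 2" "x mod 3 = 2 \<Longrightarrow> Suc x mod 3 = 0"
  "x mod 3 = 0 \<Longrightarrow> Suc x mod 3 = 1"
  by (simp_all add: mod_Suc)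

lemma block_ok:
  assumes x: "1 \<le> x" "x \<le> l" and st: "stbl l (posx x, Kx x)"
  shows "ok l (posx x, Kx x) (block x) (posx (Suc x), Kx (Suc x))"
proof -
  have "x mod 3 = 1 \<or> x mod 3 = 2 \<or> x mod 3 = 0" by auto
  then show ?thesis
  proof (elim disjE)
    assume m: "x mod 3 = 1"
    have "ok l (P (Some (V x)) None (Some (Q 2)), Kbase x \<union> {{Pv 3, Q 2}}) (blk1 x)
     (P (Some (Q 2)) (Some (V (Suc x))) None, Kbase (Suc x) \<union> {{Pv 3, Q 2}})"
      by (rule blk1_ok[OF x m]) (use st m in \<open>simp add: posx_def Kx_def\<close>)
    then show ?thesis using m modSuc(1)[OF m] unfolding posx_def Kx_def block_def by simp
  next
    assume m: "x mod 3 = 2"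
    have "ok l (P (Some (Q 2)) (Some (V x)) None, Kbase x \<union> {{Pv 3, Q 2}}) (blk2 x)
     (P None (Some (Pv 3)) (Some (V (Suc x))), Kbase (Suc x))"
      by (rule blk2_ok[OF x m]) (use st m in \<open>simp add: posx_def Kx_def\<close>)
    then show ?thesis using m modSuc(2)[OF m] unfolding posx_def Kx_def block_def by simp
  next
    assume m: "x mod 3 = 0"
    have "ok l (P None (Some (Pv 3)) (Some (V x)), Kbase x) (blk0 x)
     (P (Some (V (Suc x))) None (Some (Q 2)), Kbase (Suc x) \<union> {{Pv 3, Q 2}})"
      by (rule blk0_ok[OF x m]) (use st m in \<open>simp add: posx_def Kx_def\<close>)
    then show ?thesis using m modSuc(3)[OF m] unfolding posx_def Kx_def block_def by simp
  qed
qed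

fun blocks :: "nat \<Rightarrow> tv move list" where
  "blocks 0 = []"
| "blocks (Suc n) = blocks n @ block (Suc n)"

lemma blocks_ok: "n \<le> l \<Longrightarrow> ok l (posx (Suc 0), Kx (Suc 0)) (blocks n) (posx (Suc n), Kx (Suc n))"
proof (induction n)
  case 0
  show ?case using ok_nil[OF ok_stbl[OF init_ok]] by simp
next
  case (Suc n)
  then have ih: "ok l (posx (Suc 0), Kx (Suc 0)) (blocks n) (posx (Suc n), Kx (Suc n))" by simp
  have "ok l (posx (Suc n), Kx (Suc n)) (block (Suc n)) (posx (Suc (Suc n)), Kx (Suc (Suc n)))"
    by (rule block_ok) (use Suc.prems ok_stbl[OF ih] in auto)
  then show ?case using ok_trans[OF ih] by simp
qed



definition prem :: "nat \<Rightarrow> tv move list" where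
  "prem y = (if y mod 3 = 1 then [Remove 1] else if y mod 3 = 2 then [Remove 2, Place 3 (Q 2), Remove 1]
     else [Remove 3, Place 3 (Pv 3), Slide 3 (Pv 3) (Q 2), Remove 2])"

lemma pre_ok:
  assumes y: "l < y" and st: "stbl l (posx y, Kx y)"
  shows "ok l (posx y, Kx y) (prem y) (P None None (Some (Q 2)), Kbase y \<union> {{Pv 3, Q 2}})"
proof -
  have "y mod 3 = 1 \<or> y mod 3 = 2 \<or> y mod 3 = 0" by auto
  then show ?thesis
  proof (elim disjE)
    assume m: "y mod 3 = 1"
    then have st0: "stbl l (P (Some (V y)) None (Some (Q 2)), Kbase y \<union> {{Pv 3, Q 2}})"
      using st by (simp add: posx_def Kx_def)
    have s1: "ok l (P (Some (V y)) None (Some (Q 2)), Kbase y \<union> {{Pv 3, Q 2}}) [Remove 1]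
       (P None None (Some (Q 2)), Kbase y \<union> {{Pv 3, Q 2}})"
    proof (rule ok_remove_free[OF st0, where N="bigN y"])
      show "closedN (T_edges l) (occupied (P None None (Some (Q 2)))) (bigN y)"
        by (rule bigN_closed) (use y in auto)
      show "cleanN (T_edges l) (occupied (P None None (Some (Q 2)))) (bigN y) (Kbase y \<union> {{Pv 3, Q 2}})"
        by (rule bigN_clean) (use y in auto)
    qed (auto simp: in_bigN)
    then show ?thesis using m unfolding posx_def Kx_def prem_def by simp
  next
    assume m: "y mod 3 = 2"
    then have st0: "stbl l (P (Some (Q 2)) (Some (V y)) None, Kbase y \<union> {{Pv 3, Q 2}})"
      using st by (simp add: posx_def Kx_def)
    have s1: "ok l (P (Some (Q 2)) (Some (V y)) None, Kbase y \<union> {{Pv 3, Q 2}}) [Remove 2]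
       (P (Some (Q 2)) None None, Kbase y \<union> {{Pv 3, Q 2}})"
    proof (rule ok_remove_free[OF st0, where N="bigN y"])
      show "closedN (T_edges l) (occupied (P (Some (Q 2)) None None)) (bigN y)"
        by (rule bigN_closed) (use y in auto)
      show "cleanN (T_edges l) (occupied (P (Some (Q 2)) None None)) (bigN y) (Kbase y \<union> {{Pv 3, Q 2}})"
        by (rule bigN_clean) (use y in auto)
    qed (auto simp: in_bigN)
    note st1 = ok_stbl[OF s1]
    have s2: "ok l (P (Some (Q 2)) None None, Kbase y \<union> {{Pv 3, Q 2}}) [Place 3 (Q 2)]
       (P (Some (Q 2)) None (Some (Q 2)), Kbase y \<union> {{Pv 3, Q 2}})"
      by (rule ok_place[OF st1 _ _ edP(4)[folded swapP(2)]]) (auto simp: colP(4)[folded swapP(2)])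
    note st2 = ok_stbl[OF s2]
    have s3: "ok l (P (Some (Q 2)) None (Some (Q 2)), Kbase y \<union> {{Pv 3, Q 2}}) [Remove 1]
       (P None None (Some (Q 2)), Kbase y \<union> {{Pv 3, Q 2}})"
      by (rule ok_remove_keep[OF st2, where i=3]) auto
    show ?thesis using ok_cons[OF s1 ok_cons[OF s2 s3]] m unfolding posx_def Kx_def prem_def by simp
  next
    assume m: "y mod 3 = 0"
    then have st0: "stbl l (P None (Some (Pv 3)) (Some (V y)), Kbase y)"
      using st by (simp add: posx_def Kx_def)
    have s1: "ok l (P None (Some (Pv 3)) (Some (V y)), Kbase y) [Remove 3]
       (P None (Some (Pv 3)) None, Kbase y)"
    proof (rule ok_remove_free[OF st0, where N="bigN y"])
      show "closedN (T_edges l) (occupied (P None (Some (Pv 3)) None)) (bigN y)"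
        by (rule bigN_closed) (use y in auto)
      show "cleanN (T_edges l) (occupied (P None (Some (Pv 3)) None)) (bigN y) (Kbase y)"
        by (rule bigN_clean) (use y in auto)
    qed (auto simp: in_bigN)
    note st1 = ok_stbl[OF s1]
    have s2: "ok l (P None (Some (Pv 3)) None, Kbase y) [Place 3 (Pv 3)]
       (P None (Some (Pv 3)) (Some (Pv 3)), Kbase y)"
      by (rule ok_place[OF st1 _ _ edP(4)]) (auto simp: colP(4))
    note st2 = ok_stbl[OF s2]
    have s3: "ok l (P None (Some (Pv 3)) (Some (Pv 3)), Kbase y) [Slide 3 (Pv 3) (Q 2)]
       (P None (Some (Pv 3)) (Some (Q 2)), Kbase y \<union> {{Pv 3, Q 2}})"
      by (rule ok_slide_keep[OF st2 _ _ _ _ edP(4), where i=2]) (auto simp: colP(4))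
    note st3 = ok_stbl[OF s3]
    have s4: "ok l (P None (Some (Pv 3)) (Some (Q 2)), Kbase y \<union> {{Pv 3, Q 2}}) [Remove 2]
       (P None None (Some (Q 2)), Kbase y \<union> {{Pv 3, Q 2}})"
    proof (rule ok_remove_free[OF st3, where N="bigN y"])
      show "closedN (T_edges l) (occupied (P None None (Some (Q 2)))) (bigN y)"
        by (rule bigN_closed) (use y in auto)
      show "cleanN (T_edges l) (occupied (P None None (Some (Q 2)))) (bigN y) (Kbase y \<union> {{Pv 3, Q 2}})"
        by (rule bigN_clean) (use y in auto)
    qed (auto simp: in_bigN)
    show ?thesis using ok_cons[OF s1 ok_cons[OF s2 ok_cons[OF s3 s4]]] m unfolding posx_def Kx_def prem_def by simp
  qed
qed

lemma TE_sub: "i = 1 \<or> i = 2 \<Longrightarrow> TE i \<subseteq> T_edges l"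
  unfolding TE_def TEj_def using edQA[of i _ l] edAB[of i _ _ l] by auto

lemma Kbase_sub: "x \<le> Suc l \<Longrightarrow> Kbase x \<subseteq> T_edges l"
  unfolding Kbase_def using TE_sub[of 1 l] edP[of l] edVV[of _ l] eW[of _ l] by auto

lemma E_eq: "T_edges l = Kbase (Suc l) \<union> {{Pv 3, Q 2}} \<union> TE 2"
proof
  show "Kbase (Suc l) \<union> {{Pv 3, Q 2}} \<union> TE 2 \<subseteq> T_edges l"
    using Kbase_sub[of "Suc l" l] TE_sub[of 2 l] edP(4)[of l] by auto
next
  show "T_edges l \<subseteq> Kbase (Suc l) \<union> {{Pv 3, Q 2}} \<union> TE 2"
  proof
    fix e assume "e \<in> T_edges l"
    then obtain a b where ab: "e = {a, b}" "Ed l a b" using T_edges_cases by blast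
    from ab(2)[unfolded Ed_def] show "e \<in> Kbase (Suc l) \<union> {{Pv 3, Q 2}} \<union> TE 2"
    proof (elim disjE exE conjE)
      fix i j assume h: "i \<in> {1, 2}" "j < 3" "a = Q i" "b = A i j"
      then show ?thesis using ab(1) Kb_mem(1)[OF h(2), of "Suc l"] TE_mem(1)[OF h(2), of 2] by auto
    next
      fix i j k assume h: "i \<in> {1, 2}" "j < 3" "k < 3" "a = A i j" "b = B i j k"
      then show ?thesis using ab(1) Kb_mem(2)[OF h(2,3), of "Suc l"] TE_mem(2)[OF h(2,3), of 2] by auto
    next
      fix x assume h: "x \<le> l" "a = V x" "b = V (Suc x)"
      then show ?thesis using ab(1) Kb_mem(6)[of x "Suc l"] by auto
    next
      fix x k assume h: "1 \<le> x" "x \<le> l" "k < 2" "a = V x" "b = W x k"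
      then show ?thesis using ab(1) Kb_mem(7)[OF h(1) _ h(3), of "Suc l"] by auto
    qed (use ab(1) Kb_mem(3-5) in auto)
  qed
qed

definition strategy :: "nat \<Rightarrow> tv move list" where
  "strategy l = initm @ blocks l @ prem (Suc l) @ submoves 2"

lemma strategy_ok: "ok l (P None None None, {}) (strategy l) (P None None (Some (Q 2)), T_edges l)"
proof -
  note s1 = init_ok[of l]
  note s2 = blocks_ok[of l l, OF order.refl]
  note s3 = pre_ok[OF lessI ok_stbl[OF s2]]
  have s4: "ok l (P None None (Some (Q 2)), Kbase (Suc l) \<union> {{Pv 3, Q 2}}) (submoves 2)
      (P None None (Some (Q 2)), Kbase (Suc l) \<union> {{Pv 3, Q 2}} \<union> TE 2)"
    by (rule sub_ok[OF ok_stbl[OF s3]]) simp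
  show ?thesis using ok_trans[OF s1 ok_trans[OF s2 ok_trans[OF s3 s4]]] E_eq[of l]
    unfolding strategy_def by simp
qed

theorem lemma3p6:
  fixes l :: nat
  assumes "l \<ge> 3"
  shows "\<exists>ms. search_strategy (T_edges l) (T_color l) {1, 2, 3} (\<lambda>j. j) ms"
proof -
  have "P None None None = (\<lambda>_. None)" by (auto simp: P_def fun_eq_iff)
  then have "run (T_edges l) (T_color l) {1, 2, 3} (\<lambda>j. j) (\<lambda>_. None, {}) (strategy l)
      = Some (P None None (Some (Q 2)), T_edges l)"
    using strategy_ok[of l] unfolding ok_def by simp
  then show ?thesis unfolding search_strategy_def by blast
qed


end
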